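(* Let $\mathbb{G}$ be a finite graph and let $\mathbb{H}$ be a countable graph that is universal for $\mathrm{Forb}(\mathbb{G})$. Then $\mathrm{CSP}(\mathbb{H})$ is solvable in polynomial time.
   Context: A graph is a structure $(V,E)$ with a single symmetric binary relation $E$ (loops allowed). $\mathrm{Forb}(\mathbb{G})$ is the class of graphs $\mathbb{X}$ such that there is no homomorphism from $\mathbb{G}$ to $\mathbb{X}$. A countable graph $\mathbb{H}$ is universal for $\mathrm{Forb}(\mathbb{G})$ if a countable graph embeds into $\mathbb{H}$ if and only if it belongs to $\mathrm{Forb}(\mathbb{G})$. $\mathrm{CSP}(\mathbb{H})$ is the problem of deciding whether a given finite conjunction of atomic formulas $E(x,y)$ (equivalently, a given finite graph) is satisfiable in $\mathbb{H}$ (equivalently, maps homomorphically to $\mathbb{H}$). *)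

theory Defs
  imports Main "HOL-Library.Countable_Set"
begin

section \<open>Graphs (symmetric binary relation, loops allowed), given by a vertex carrier\<close>

definition is_graph :: "'a set \<Rightarrow> ('a \<times> 'a) set \<Rightarrow> bool" where
  "is_graph V E \<longleftrightarrow> E \<subseteq> V \<times> V \<and> sym E"

definition graph_hom :: "'a set \<Rightarrow> ('a \<times> 'a) set \<Rightarrow> 'b set \<Rightarrow> ('b \<times> 'b) set \<Rightarrow> ('a \<Rightarrow> 'b) \<Rightarrow> bool" where
  "graph_hom V E V' E' f \<longleftrightarrow> (\<forall>x\<in>V. f x \<in> V') \<and> (\<forall>(x,y)\<in>E. (f x, f y) \<in> E')"

definition graph_emb :: "'a set \<Rightarrow> ('a \<times> 'a) set \<Rightarrow> 'b set \<Rightarrow> ('b \<times> 'b) set \<Rightarrow> ('a \<Rightarrow> 'b) \<Rightarrow> bool" where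
  "graph_emb V E V' E' f \<longleftrightarrow> graph_hom V E V' E' f \<and> inj_on f V \<and>
     (\<forall>x\<in>V. \<forall>y\<in>V. (f x, f y) \<in> E' \<longrightarrow> (x, y) \<in> E)"

definition in_Forb :: "'g set \<Rightarrow> ('g \<times> 'g) set \<Rightarrow> 'a set \<Rightarrow> ('a \<times> 'a) set \<Rightarrow> bool" where
  "in_Forb VG EG V E \<longleftrightarrow> \<not> (\<exists>f. graph_hom VG EG V E f)"

text \<open>Every countable graph is isomorphic to one whose vertices are natural numbers, so it
  suffices to quantify over graphs with vertex set a subset of nat.\<close>
definition universal_for_Forb :: "'g set \<Rightarrow> ('g \<times> 'g) set \<Rightarrow> 'h set \<Rightarrow> ('h \<times> 'h) set \<Rightarrow> bool" where
  "universal_for_Forb VG EG VH EH \<longleftrightarrow>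
     (\<forall>(V :: nat set) E. is_graph V E \<longrightarrow>
        ((\<exists>f. graph_emb V E VH EH f) \<longleftrightarrow> in_Forb VG EG V E))"

definition csp_instance :: "nat \<Rightarrow> (nat \<times> nat) list \<Rightarrow> bool" where
  "csp_instance n es \<longleftrightarrow> (\<forall>(x,y)\<in>set es. x < n \<and> y < n)"

definition csp_sat :: "'h set \<Rightarrow> ('h \<times> 'h) set \<Rightarrow> nat \<Rightarrow> (nat \<times> nat) list \<Rightarrow> bool" where
  "csp_sat VH EH n es \<longleftrightarrow>
     (\<exists>f. (\<forall>x<n. f x \<in> VH) \<and> (\<forall>(x,y)\<in>set es. (f x, f y) \<in> EH))"

section \<open>Machine model: unit-cost RAM with addition, truncated subtraction, indirect addressing\<close>

datatype instr =
    LoadConst nat nat        (* M[r] := c *)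
  | AddI nat nat nat         (* M[r] := M[a] + M[b] *)
  | SubI nat nat nat         (* M[r] := M[a] - M[b]  (truncated) *)
  | LoadInd nat nat          (* M[r] := M[M[a]] *)
  | StoreInd nat nat         (* M[M[a]] := M[b] *)
  | Jz nat nat               (* if M[r] = 0 then goto l *)
  | Jmp nat                  (* goto l *)

type_synonym config = "nat \<times> (nat \<Rightarrow> nat)"

text \<open>The machine halts when the program counter leaves the program; halted
  configurations are fixed points of the step function.\<close>
fun ram_step :: "instr list \<Rightarrow> config \<Rightarrow> config" where
  "ram_step P (pc, M) =
    (if length P \<le> pc then (pc, M) else
     (case P ! pc of
        LoadConst r c \<Rightarrow> (Suc pc, M(r := c))
      | AddI r a b \<Rightarrow> (Suc pc, M(r := M a + M b))
      | SubI r a b \<Rightarrow> (Suc pc, M(r := M a - M b))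
      | LoadInd r a \<Rightarrow> (Suc pc, M(r := M (M a)))
      | StoreInd a b \<Rightarrow> (Suc pc, M(M a := M b))
      | Jz r l \<Rightarrow> (if M r = 0 then (l, M) else (Suc pc, M))
      | Jmp l \<Rightarrow> (l, M)))"

definition ram_halted :: "instr list \<Rightarrow> config \<Rightarrow> bool" where
  "ram_halted P c \<longleftrightarrow> length P \<le> fst c"

text \<open>Input encoding of an instance: M[0] = n, M[1] = number of atoms,
  M[2+2i], M[3+2i] = the i-th atom, all other cells 0.\<close>
definition ram_input :: "nat \<Rightarrow> (nat \<times> nat) list \<Rightarrow> nat \<Rightarrow> nat" where
  "ram_input n es = (\<lambda>a.
     if a = 0 then n
     else if a = 1 then length es
     else if a - 2 < 2 * length es then
       (if even (a - 2) then fst (es ! ((a - 2) div 2)) else snd (es ! ((a - 2) div 2)))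
     else 0)"

definition ram_run :: "instr list \<Rightarrow> nat \<Rightarrow> (nat \<times> nat) list \<Rightarrow> nat \<Rightarrow> config" where
  "ram_run P n es t = (ram_step P ^^ t) (0, ram_input n es)"

definition inst_size :: "nat \<Rightarrow> (nat \<times> nat) list \<Rightarrow> nat" where
  "inst_size n es = n + length es + 1"

definition csp_poly_time :: "'h set \<Rightarrow> ('h \<times> 'h) set \<Rightarrow> bool" where
  "csp_poly_time VH EH \<longleftrightarrow>
     (\<exists>(P :: instr list) (c :: nat) (d :: nat). \<forall>n es. csp_instance n es \<longrightarrow>
        (\<exists>t. t \<le> c * inst_size n es ^ d \<and> ram_halted P (ram_run P n es t) \<and>
             (snd (ram_run P n es t) 0 \<noteq> 0 \<longleftrightarrow> csp_sat VH EH n es)))"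

end

theory Submission
  imports Defs
begin


datatype acom = ASkip | AConst nat nat | AAdd nat nat nat | ASub nat nat nat | ALoad nat nat
  | ASeq acom acom | AIf nat acom acom | AWhile nat acom

abbreviation vr :: "(nat \<Rightarrow> nat) \<Rightarrow> nat \<Rightarrow> nat" where "vr M x \<equiv> M (M 1 + x)"

inductive big :: "acom \<Rightarrow> (nat \<Rightarrow> nat) \<Rightarrow> nat \<Rightarrow> (nat \<Rightarrow> nat) \<Rightarrow> bool" where
  bSkip: "big ASkip M 0 M"
| bConst: "big (AConst x c) M 4 (M(M 1 + x := c))"
| bAdd: "big (AAdd x y z) M 10 (M(M 1 + x := vr M y + vr M z))"
| bSub: "big (ASub x y z) M 10 (M(M 1 + x := vr M y - vr M z))"
| bLoad: "3 < vr M y \<Longrightarrow> big (ALoad x y) M 7 (M(M 1 + x := M (vr M y)))"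
| bSeq: "big c1 M t1 M1 \<Longrightarrow> big c2 M1 t2 M2 \<Longrightarrow> big (ASeq c1 c2) M (t1+t2) M2"
| bIfT: "vr M x \<noteq> 0 \<Longrightarrow> big c1 M t M' \<Longrightarrow> big (AIf x c1 c2) M (t+5) M'"
| bIfF: "vr M x = 0 \<Longrightarrow> big c2 M t M' \<Longrightarrow> big (AIf x c1 c2) M (t+4) M'"
| bWF: "vr M x = 0 \<Longrightarrow> big (AWhile x c) M 4 M"
| bWT: "vr M x \<noteq> 0 \<Longrightarrow> big c M t1 M1 \<Longrightarrow> big (AWhile x c) M1 t2 M2 \<Longrightarrow> big (AWhile x c) M (t1+t2+5) M2"

fun clen :: "acom \<Rightarrow> nat" where
  "clen ASkip = 0" | "clen (AConst x c) = 4" | "clen (AAdd x y z) = 10" | "clen (ASub x y z) = 10"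
| "clen (ALoad x y) = 7" | "clen (ASeq c1 c2) = clen c1 + clen c2"
| "clen (AIf x c1 c2) = clen c1 + clen c2 + 5" | "clen (AWhile x c) = clen c + 5"

fun comp :: "nat \<Rightarrow> acom \<Rightarrow> instr list" where
  "comp s ASkip = []"
| "comp s (AConst x c) = [LoadConst 0 x, AddI 0 0 1, LoadConst 2 c, StoreInd 0 2]"
| "comp s (AAdd x y z) = [LoadConst 0 y, AddI 0 0 1, LoadInd 2 0, LoadConst 0 z, AddI 0 0 1, LoadInd 3 0, AddI 2 2 3, LoadConst 0 x, AddI 0 0 1, StoreInd 0 2]"
| "comp s (ASub x y z) = [LoadConst 0 y, AddI 0 0 1, LoadInd 2 0, LoadConst 0 z, AddI 0 0 1, LoadInd 3 0, SubI 2 2 3, LoadConst 0 x, AddI 0 0 1, StoreInd 0 2]"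
| "comp s (ALoad x y) = [LoadConst 0 y, AddI 0 0 1, LoadInd 2 0, LoadInd 2 2, LoadConst 0 x, AddI 0 0 1, StoreInd 0 2]"
| "comp s (ASeq c1 c2) = comp s c1 @ comp (s + clen c1) c2"
| "comp s (AIf x c1 c2) = [LoadConst 0 x, AddI 0 0 1, LoadInd 3 0, Jz 3 (s + 5 + clen c1)] @ comp (s+4) c1 @ [Jmp (s + 5 + clen c1 + clen c2)] @ comp (s + 5 + clen c1) c2"
| "comp s (AWhile x c) = [LoadConst 0 x, AddI 0 0 1, LoadInd 3 0, Jz 3 (s + 5 + clen c)] @ comp (s+4) c @ [Jmp s]"

lemma len_comp[simp]: "length (comp s c) = clen c"
  by (induction c arbitrary: s) auto

definition at :: "instr list \<Rightarrow> nat \<Rightarrow> instr list \<Rightarrow> bool" where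
  "at P s xs \<longleftrightarrow> s + length xs \<le> length P \<and> (\<forall>i<length xs. P ! (s+i) = xs ! i)"

lemma at_app: "at P s (xs @ ys) \<longleftrightarrow> at P s xs \<and> at P (s + length xs) ys"
  unfolding at_def by (auto simp: nth_append add.assoc) (metis add_diff_inverse_nat nat_add_left_cancel_less)

lemma at_Cons: "at P s (x # xs) \<longleftrightarrow> s < length P \<and> P ! s = x \<and> at P (Suc s) xs"
  using at_app[of P s "[x]" xs] by (auto simp: at_def)

lemma at_Nil[simp]: "at P s [] \<longleftrightarrow> s \<le> length P" by (simp add: at_def)

lemma big_base: "big c M t M' \<Longrightarrow> 4 \<le> M 1 \<Longrightarrow> M' 1 = M 1"
  by (induction rule: big.induct) auto

definition agree :: "(nat \<Rightarrow> nat) \<Rightarrow> (nat \<Rightarrow> nat) \<Rightarrow> bool" where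
  "agree Mc Ma \<longleftrightarrow> (\<forall>a. a \<noteq> 0 \<longrightarrow> a \<noteq> 2 \<longrightarrow> a \<noteq> 3 \<longrightarrow> Mc a = Ma a)"

lemma fp_Suc: "(f ^^ Suc n) x = (f ^^ n) (f x)" by (simp add: funpow_Suc_right del: funpow.simps)
lemma fp_add: "(f ^^ (m + n)) x = (f ^^ n) ((f ^^ m) x)" by (metis add.commute comp_apply funpow_add)

lemma step_at: "s < length P \<Longrightarrow> P ! s = i \<Longrightarrow> ram_step P (s, M) =
    (case i of
        LoadConst r c \<Rightarrow> (Suc s, M(r := c))
      | AddI r a b \<Rightarrow> (Suc s, M(r := M a + M b))
      | SubI r a b \<Rightarrow> (Suc s, M(r := M a - M b))
      | LoadInd r a \<Rightarrow> (Suc s, M(r := M (M a)))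
      | StoreInd a b \<Rightarrow> (Suc s, M(M a := M b))
      | Jz r l \<Rightarrow> (if M r = 0 then (l, M) else (Suc s, M))
      | Jmp l \<Rightarrow> (l, M))"
  by simp

lemma test_run:
  assumes "at P s [LoadConst 0 x, AddI 0 0 1, LoadInd 3 0]" "agree Mc M" "4 \<le> M 1"
  shows "(ram_step P ^^ 3) (s, Mc) = (s + 3, Mc(0 := M 1 + x, 3 := vr M x)) \<and> agree (Mc(0 := M 1 + x, 3 := vr M x)) M"
proof -
  have a1: "Mc 1 = M 1" "Mc (M 1 + x) = M (M 1 + x)" using assms by (auto simp: agree_def)
  show ?thesis using assms a1 by (auto simp: at_Cons numeral_eq_Suc fp_Suc agree_def fun_upd_twist add.commute)
qed

lemma comp_correct:
  "big c Ma t Ma' \<Longrightarrow> at P s (comp s c) \<Longrightarrow> 4 \<le> Ma 1 \<Longrightarrow> agree Mc Ma \<Longrightarrow>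
   \<exists>Mc'. (ram_step P ^^ t) (s, Mc) = (s + clen c, Mc') \<and> agree Mc' Ma'"
proof (induction arbitrary: s Mc rule: big.induct)
  case (bSkip M)
  then show ?case by auto
next
  case (bConst x c M)
  have a1: "Mc 1 = M 1" using bConst by (auto simp: agree_def)
  show ?case using bConst a1
    by (auto simp: at_Cons numeral_eq_Suc fp_Suc agree_def add.commute)
next
  case (bAdd x y z M)
  have a1: "Mc 1 = M 1" "Mc (M 1 + y) = M (M 1 + y)" "Mc (M 1 + z) = M (M 1 + z)" using bAdd by (auto simp: agree_def)
  show ?case using bAdd a1
    by (auto simp: at_Cons numeral_eq_Suc fp_Suc agree_def add.commute)
next
  case (bSub x y z M)
  have a1: "Mc 1 = M 1" "Mc (M 1 + y) = M (M 1 + y)" "Mc (M 1 + z) = M (M 1 + z)" using bSub by (auto simp: agree_def)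
  show ?case using bSub a1
    by (auto simp: at_Cons numeral_eq_Suc fp_Suc agree_def add.commute)
next
  case (bLoad M y x)
  have a1: "Mc 1 = M 1" "Mc (M 1 + y) = M (M 1 + y)" "Mc (vr M y) = M (vr M y)" using bLoad by (auto simp: agree_def)
  show ?case using bLoad a1
    by (auto simp: at_Cons numeral_eq_Suc fp_Suc agree_def add.commute)
next
  case (bSeq c1 M t1 M1 c2 t2 M2)
  from bSeq.prems have at1: "at P s (comp s c1)" and at2: "at P (s + clen c1) (comp (s + clen c1) c2)"
    by (auto simp: at_app)
  obtain Mc1 where 1: "(ram_step P ^^ t1) (s, Mc) = (s + clen c1, Mc1)" "agree Mc1 M1"
    using bSeq.IH(1)[OF at1] bSeq.prems by blast
  have "4 \<le> M1 1" using big_base[OF bSeq.hyps(1)] bSeq.prems by simp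
  then obtain Mc2 where 2: "(ram_step P ^^ t2) (s + clen c1, Mc1) = (s + clen c1 + clen c2, Mc2)" "agree Mc2 M2"
    using bSeq.IH(2)[OF at2] 1 by blast
  show ?case using 1 2 by (auto simp: fp_add add.assoc)
next
  case (bIfT M x c1 t M' c2)
  from bIfT.prems have at0: "at P s [LoadConst 0 x, AddI 0 0 1, LoadInd 3 0]"
    and atj: "at P (s+3) [Jz 3 (s + 5 + clen c1)]"
    and at1: "at P (s+4) (comp (s+4) c1)" and atm: "at P (s + 4 + clen c1) [Jmp (s + 5 + clen c1 + clen c2)]"
    by (auto simp: at_app at_Cons numeral_eq_Suc)
  define Mc0 where "Mc0 = Mc(0 := M 1 + x, 3 := vr M x)"
  have r0: "(ram_step P ^^ 3) (s, Mc) = (s + 3, Mc0)" "agree Mc0 M"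
    using test_run[OF at0 bIfT.prems(3,2)] by (auto simp: Mc0_def)
  have r1: "ram_step P (s+3, Mc0) = (s+4, Mc0)" using atj bIfT.hyps(1) by (auto simp: at_Cons Mc0_def)
  obtain Mc1 where 1: "(ram_step P ^^ t) (s+4, Mc0) = (s + 4 + clen c1, Mc1)" "agree Mc1 M'"
    using bIfT.IH[OF at1 bIfT.prems(2) r0(2)] by blast
  have r2: "ram_step P (s + 4 + clen c1, Mc1) = (s + 5 + clen c1 + clen c2, Mc1)" using atm by (auto simp: at_Cons)
  have "t + 5 = 3 + (1 + (t + 1))" by simp
  then show ?case using r0 r1 1 r2 by (simp only: fp_add) (auto simp: fp_Suc)
next
  case (bIfF M x c2 t M' c1)
  from bIfF.prems have at0: "at P s [LoadConst 0 x, AddI 0 0 1, LoadInd 3 0]"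
    and atj: "at P (s+3) [Jz 3 (s + 5 + clen c1)]"
    and at2: "at P (s + 5 + clen c1) (comp (s + 5 + clen c1) c2)"
    by (auto simp: at_app at_Cons numeral_eq_Suc add.assoc)
  define Mc0 where "Mc0 = Mc(0 := M 1 + x, 3 := vr M x)"
  have r0: "(ram_step P ^^ 3) (s, Mc) = (s + 3, Mc0)" "agree Mc0 M"
    using test_run[OF at0 bIfF.prems(3,2)] by (auto simp: Mc0_def)
  have r1: "ram_step P (s+3, Mc0) = (s + 5 + clen c1, Mc0)" using atj bIfF.hyps(1) by (auto simp: at_Cons Mc0_def)
  obtain Mc1 where 1: "(ram_step P ^^ t) (s + 5 + clen c1, Mc0) = (s + 5 + clen c1 + clen c2, Mc1)" "agree Mc1 M'"
    using bIfF.IH[OF at2 bIfF.prems(2) r0(2)] by blast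
  have "t + 4 = 3 + (1 + t)" by simp
  then show ?case using r0 r1 1 by (simp only: fp_add) (auto simp: fp_Suc add.commute add.left_commute)
next
  case (bWF M x c)
  from bWF.prems have at0: "at P s [LoadConst 0 x, AddI 0 0 1, LoadInd 3 0]"
    and atj: "at P (s+3) [Jz 3 (s + 5 + clen c)]"
    by (auto simp: at_app at_Cons numeral_eq_Suc add.assoc)
  define Mc0 where "Mc0 = Mc(0 := M 1 + x, 3 := vr M x)"
  have r0: "(ram_step P ^^ 3) (s, Mc) = (s + 3, Mc0)" "agree Mc0 M"
    using test_run[OF at0 bWF.prems(3,2)] by (auto simp: Mc0_def)
  have r1: "ram_step P (s+3, Mc0) = (s + 5 + clen c, Mc0)" using atj bWF.hyps(1) by (auto simp: at_Cons Mc0_def)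
  have "(4::nat) = 3 + 1" by simp
  then show ?case using r0 r1 by (simp only: fp_add) (auto simp: fp_Suc add.commute add.left_commute)
next
  case (bWT M x c t1 M1 t2 M2)
  from bWT.prems have at0: "at P s [LoadConst 0 x, AddI 0 0 1, LoadInd 3 0]"
    and atj: "at P (s+3) [Jz 3 (s + 5 + clen c)]"
    and at1: "at P (s+4) (comp (s+4) c)" and atm: "at P (s + 4 + clen c) [Jmp s]"
    by (auto simp: at_app at_Cons numeral_eq_Suc)
  define Mc0 where "Mc0 = Mc(0 := M 1 + x, 3 := vr M x)"
  have r0: "(ram_step P ^^ 3) (s, Mc) = (s + 3, Mc0)" "agree Mc0 M"
    using test_run[OF at0 bWT.prems(3,2)] by (auto simp: Mc0_def)
  have r1: "ram_step P (s+3, Mc0) = (s+4, Mc0)" using atj bWT.hyps(1) by (auto simp: at_Cons Mc0_def)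
  obtain Mc1 where 1: "(ram_step P ^^ t1) (s+4, Mc0) = (s + 4 + clen c, Mc1)" "agree Mc1 M1"
    using bWT.IH(1)[OF at1 bWT.prems(2) r0(2)] by blast
  have r2: "ram_step P (s + 4 + clen c, Mc1) = (s, Mc1)" using atm by (auto simp: at_Cons)
  have "4 \<le> M1 1" using big_base[OF bWT.hyps(2)] bWT.prems by simp
  then obtain Mc2 where 2: "(ram_step P ^^ t2) (s, Mc1) = (s + clen (AWhile x c), Mc2)" "agree Mc2 M2"
    using bWT.IH(2)[OF bWT.prems(1) _ 1(2)] by blast
  have "t1 + t2 + 5 = 3 + (1 + (t1 + (1 + t2)))" by simp
  then show ?case using r0 r1 1 r2 2 by (simp only: fp_add) (auto simp: fp_Suc)
qed



fun wr :: "acom \<Rightarrow> nat set" where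
  "wr ASkip = {}" | "wr (AConst x c) = {x}" | "wr (AAdd x y z) = {x}" | "wr (ASub x y z) = {x}"
| "wr (ALoad x y) = {x}" | "wr (ASeq c1 c2) = wr c1 \<union> wr c2"
| "wr (AIf x c1 c2) = wr c1 \<union> wr c2" | "wr (AWhile x c) = wr c"

lemma big_frame: "big c M t M' \<Longrightarrow> 4 \<le> M 1 \<Longrightarrow>
   (\<forall>a. a < M 1 \<longrightarrow> M' a = M a) \<and> (\<forall>x. x \<notin> wr c \<longrightarrow> M' (M 1 + x) = M (M 1 + x))"
proof (induction rule: big.induct)
  case (bSeq c1 M t1 M1 c2 t2 M2)
  then show ?case using big_base[OF bSeq.hyps(1)] by auto
next
  case (bWT M x c t1 M1 t2 M2)
  then show ?case using big_base[OF bWT.hyps(2)] by auto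
qed auto

definition tot :: "acom \<Rightarrow> (nat \<Rightarrow> nat) \<Rightarrow> (nat \<Rightarrow> (nat \<Rightarrow> nat) \<Rightarrow> bool) \<Rightarrow> bool" where
  "tot c M Q \<longleftrightarrow> (\<exists>t M'. big c M t M' \<and> Q t M')"

inductive_cases bSkipE: "big ASkip M t M'"
inductive_cases bConstE: "big (AConst x c) M t M'"
inductive_cases bAddE: "big (AAdd x y z) M t M'"
inductive_cases bSubE: "big (ASub x y z) M t M'"
inductive_cases bLoadE: "big (ALoad x y) M t M'"
inductive_cases bSeqE: "big (ASeq c1 c2) M t M'"
inductive_cases bIfE: "big (AIf x c1 c2) M t M'"

lemma tot_Skip[simp]: "tot ASkip M Q \<longleftrightarrow> Q 0 M"
  unfolding tot_def apply (rule iffI)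
   apply (auto elim!: bSkipE)[1]
  apply (auto intro!: exI bSkip)
  done
lemma tot_Const[simp]: "tot (AConst x c) M Q \<longleftrightarrow> Q 4 (M(M 1 + x := c))"
  unfolding tot_def apply (rule iffI)
   apply (auto elim!: bConstE)[1]
  apply (auto intro!: exI bConst)
  done
lemma tot_Add[simp]: "tot (AAdd x y z) M Q \<longleftrightarrow> Q 10 (M(M 1 + x := vr M y + vr M z))"
  unfolding tot_def apply (rule iffI)
   apply (auto elim!: bAddE)[1]
  apply (auto intro!: exI bAdd)
  done
lemma tot_Sub[simp]: "tot (ASub x y z) M Q \<longleftrightarrow> Q 10 (M(M 1 + x := vr M y - vr M z))"
  unfolding tot_def apply (rule iffI)
   apply (auto elim!: bSubE)[1]
  apply (auto intro!: exI bSub)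
  done
lemma tot_Load[simp]: "tot (ALoad x y) M Q \<longleftrightarrow> 3 < vr M y \<and> Q 7 (M(M 1 + x := M (vr M y)))"
  unfolding tot_def apply (rule iffI)
   apply (auto elim!: bLoadE)[1]
  apply (auto intro!: exI bLoad)
  done
lemma tot_Seq[simp]: "tot (ASeq c1 c2) M Q \<longleftrightarrow> tot c1 M (\<lambda>t1 M1. tot c2 M1 (\<lambda>t2. Q (t1+t2)))"
  unfolding tot_def
proof
  assume "\<exists>t M'. big (ASeq c1 c2) M t M' \<and> Q t M'"
  then show "\<exists>t M1. big c1 M t M1 \<and> (\<exists>ta M'. big c2 M1 ta M' \<and> Q (t + ta) M')"
    by (blast elim: bSeqE)
next
  assume "\<exists>t M1. big c1 M t M1 \<and> (\<exists>ta M'. big c2 M1 ta M' \<and> Q (t + ta) M')"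
  then show "\<exists>t M'. big (ASeq c1 c2) M t M' \<and> Q t M'" by (blast intro: bSeq)
qed
lemma tot_If[simp]: "tot (AIf x c1 c2) M Q \<longleftrightarrow>
    (if vr M x \<noteq> 0 then tot c1 M (\<lambda>t. Q (t+5)) else tot c2 M (\<lambda>t. Q (t+4)))"
proof (cases "vr M x = 0")
  case True
  have "tot (AIf x c1 c2) M Q \<longleftrightarrow> tot c2 M (\<lambda>t. Q (t+4))"
  proof
    assume "tot (AIf x c1 c2) M Q" then show "tot c2 M (\<lambda>t. Q (t+4))"
      using True unfolding tot_def by (auto elim!: bIfE)
  next
    assume "tot c2 M (\<lambda>t. Q (t+4))"
    then obtain t M' where "big c2 M t M'" "Q (t+4) M'" unfolding tot_def by blast
    then show "tot (AIf x c1 c2) M Q" using True bIfF unfolding tot_def by blast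
  qed
  then show ?thesis using True by simp
next
  case False
  have "tot (AIf x c1 c2) M Q \<longleftrightarrow> tot c1 M (\<lambda>t. Q (t+5))"
  proof
    assume "tot (AIf x c1 c2) M Q" then show "tot c1 M (\<lambda>t. Q (t+5))"
      using False unfolding tot_def by (auto elim!: bIfE)
  next
    assume "tot c1 M (\<lambda>t. Q (t+5))"
    then obtain t M' where "big c1 M t M'" "Q (t+5) M'" unfolding tot_def by blast
    then show "tot (AIf x c1 c2) M Q" using False bIfT unfolding tot_def by blast
  qed
  then show ?thesis using False by simp
qed

lemma tot_mono: "tot c M Q \<Longrightarrow> (\<And>t M'. Q t M' \<Longrightarrow> Q' t M') \<Longrightarrow> tot c M Q'"
  unfolding tot_def by blast

lemma tot_frame:
  assumes "tot c M Q" "4 \<le> M 1"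
  shows "tot c M (\<lambda>t M'. Q t M' \<and> M' 1 = M 1 \<and> (\<forall>a. a < M 1 \<longrightarrow> M' a = M a) \<and> (\<forall>x. x \<notin> wr c \<longrightarrow> vr M' x = vr M x))"
proof -
  obtain t M' where 1: "big c M t M'" "Q t M'" using assms unfolding tot_def by blast
  have "M' 1 = M 1" using big_base[OF 1(1)] assms by auto
  then show ?thesis using big_frame[OF 1(1)] 1 assms unfolding tot_def
    by (intro exI[of _ t] exI[of _ M']) auto
qed

lemma tot_While:
  assumes step: "\<And>M. I M \<Longrightarrow> vr M x \<noteq> 0 \<Longrightarrow> tot c M (\<lambda>t M'. I M' \<and> f M' < f M \<and> t \<le> B)"
  and "I M"
  shows "tot (AWhile x c) M (\<lambda>t M'. I M' \<and> vr M' x = 0 \<and> t \<le> (B+5) * f M + 4)"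
  using assms(2)
proof (induction "f M" arbitrary: M rule: less_induct)
  case less
  show ?case
  proof (cases "vr M x = 0")
    case True
    then have "big (AWhile x c) M 4 M" by (rule bWF)
    then show ?thesis using less.prems True unfolding tot_def by (intro exI[of _ 4] exI[of _ M]) auto
  next
    case False
    obtain t1 M1 where 1: "big c M t1 M1" "I M1" "f M1 < f M" "t1 \<le> B"
      using step[OF less.prems False] unfolding tot_def by blast
    obtain t2 M2 where 2: "big (AWhile x c) M1 t2 M2" "I M2" "vr M2 x = 0" "t2 \<le> (B+5) * f M1 + 4"
      using less.hyps[OF 1(3) 1(2)] unfolding tot_def by blast
    have "big (AWhile x c) M (t1+t2+5) M2" using False 1 2 by (auto intro: big.intros)
    moreover have "t1 + t2 + 5 \<le> (B+5) * f M + 4"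
    proof -
      have "(B+5) * f M1 + (B + 5) \<le> (B+5) * f M" using 1(3)
        by (metis add.commute mult_Suc_right mult_le_mono2 Suc_leI)
      then show ?thesis using 1(4) 2(4) by linarith
    qed
    ultimately show ?thesis using 2 unfolding tot_def by blast
  qed
qed

definition diff :: "nat \<Rightarrow> nat \<Rightarrow> nat \<Rightarrow> acom" where
  "diff t a u = ASeq (ASub t a u) (ASeq (ASub 13 u a) (AAdd t t 13))"

definition mat :: "nat \<Rightarrow> nat \<Rightarrow> nat \<Rightarrow> nat \<Rightarrow> acom" where
  "mat a c u v = ASeq (diff 12 a u) (ASeq (diff 17 c v) (ASeq (AAdd 12 12 17) (AIf 12 ASkip (AConst 7 1))))"

definition mb :: "nat \<Rightarrow> nat \<Rightarrow> nat \<Rightarrow> nat \<Rightarrow> acom" where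
  "mb a c u v = ASeq (mat a c u v) (mat a c v u)"

lemma wr_mb: "wr (mb a c u v) = {7,12,13,17}"
  by (auto simp: mb_def mat_def diff_def)

definition sp :: "acom \<Rightarrow> (nat \<Rightarrow> nat) \<Rightarrow> nat set \<Rightarrow> ((nat \<Rightarrow> nat) \<Rightarrow> bool) \<Rightarrow> nat \<Rightarrow> bool" where
  "sp c M W P T \<longleftrightarrow> tot c M (\<lambda>t M'. M' 1 = M 1 \<and> (\<forall>a<M 1. M' a = M a) \<and> (\<forall>x. x \<notin> W \<longrightarrow> vr M' x = vr M x) \<and> P M' \<and> t \<le> T)"

lemma sp_intro: "tot c M (\<lambda>t M'. P M' \<and> t \<le> T) \<Longrightarrow> 4 \<le> M 1 \<Longrightarrow> wr c \<subseteq> W \<Longrightarrow> sp c M W P T"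
  unfolding sp_def by (rule tot_mono, erule (1) tot_frame) auto

lemma sp_seq:
  assumes "sp c1 M Wa Pa Ta"
    and "\<And>M1. M1 1 = M 1 \<Longrightarrow> (\<forall>a<M 1. M1 a = M a) \<Longrightarrow> (\<forall>x. x \<notin> Wa \<longrightarrow> vr M1 x = vr M x) \<Longrightarrow> Pa M1 \<Longrightarrow> sp c2 M1 Wb Q Tb"
    and "Wa \<union> Wb \<subseteq> W" "Ta + Tb \<le> T"
  shows "sp (ASeq c1 c2) M W Q T"
  using assms(1) unfolding sp_def tot_Seq
  apply (rule tot_mono)
  apply (rule tot_mono)
   apply (rule assms(2)[unfolded sp_def]; simp)
  using assms(3,4) by (auto simp: subset_iff) metis

lemma sp_mono:
  assumes "sp c M W P T" "W \<subseteq> W'" "T \<le> T'"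
    "\<And>M'. M' 1 = M 1 \<Longrightarrow> (\<forall>a<M 1. M' a = M a) \<Longrightarrow> (\<forall>x. x \<notin> W \<longrightarrow> vr M' x = vr M x) \<Longrightarrow> P M' \<Longrightarrow> P' M'"
  shows "sp c M W' P' T'"
  using assms(1) unfolding sp_def
  apply (rule tot_mono) using assms(2-4) by (auto simp: subset_iff)

lemma diff_spec:
  assumes "4 \<le> M 1" "t \<noteq> 13" "a \<noteq> 13" "u \<noteq> 13" "a \<noteq> t" "u \<noteq> t"
  shows "sp (diff t a u) M {t,13} (\<lambda>M'. vr M' t = 0 \<longleftrightarrow> vr M a = vr M u) 30"
  apply (rule sp_intro)
  using assms by (auto simp: diff_def)

lemma sp_if:
  assumes "vr M x \<noteq> 0 \<Longrightarrow> sp c1 M W Q T" "vr M x = 0 \<Longrightarrow> sp c2 M W Q T" "T + 5 \<le> T'"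
  shows "sp (AIf x c1 c2) M W Q T'"
  using assms unfolding sp_def tot_If
  by (cases "vr M x = 0") (auto elim!: tot_mono)

lemma sp_while:
  assumes step: "\<And>M'. I M' \<Longrightarrow> vr M' x \<noteq> 0 \<Longrightarrow> M' 1 = M 1 \<Longrightarrow> sp c M' W (\<lambda>M''. I M'' \<and> f M'' < f M') B"
  and "I M" and "(B+5) * f M + 4 \<le> T"
  shows "sp (AWhile x c) M W (\<lambda>M'. I M' \<and> vr M' x = 0) T"
proof -
  let ?I = "\<lambda>M'. I M' \<and> M' 1 = M 1 \<and> (\<forall>a<M 1. M' a = M a) \<and> (\<forall>x. x \<notin> W \<longrightarrow> vr M' x = vr M x)"
  have "tot (AWhile x c) M (\<lambda>t M'. ?I M' \<and> vr M' x = 0 \<and> t \<le> (B+5) * f M + 4)"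
  proof (rule tot_While[where I = ?I])
    fix M' assume a: "?I M'" "vr M' x \<noteq> 0"
    show "tot c M' (\<lambda>t M''. ?I M'' \<and> f M'' < f M' \<and> t \<le> B)"
      using step[of M'] a unfolding sp_def by (auto elim!: tot_mono)
  qed (use assms(2) in auto)
  then show ?thesis unfolding sp_def using assms(3) by (auto elim!: tot_mono)
qed

lemma sp_skip: "sp ASkip M W (\<lambda>M'. M' = M) T"
  unfolding sp_def by simp

lemma mat_spec:
  assumes "4 \<le> M 1" "a \<notin> {7,12,13,17}" "c \<notin> {7,12,13,17}" "u \<notin> {7,12,13,17}" "v \<notin> {7,12,13,17}"
  shows "sp (mat a c u v) M {7,12,13,17} (\<lambda>M'. vr M' 7 \<noteq> 0 \<longleftrightarrow> vr M 7 \<noteq> 0 \<or> (vr M a = vr M u \<and> vr M c = vr M v)) 80"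
  unfolding mat_def
proof (rule sp_seq[where Wb="{7,12,13,17}" and Tb=50])
  show "sp (diff 12 a u) M {12,13} (\<lambda>M'. vr M' 12 = 0 \<longleftrightarrow> vr M a = vr M u) 30"
    by (rule diff_spec) (use assms in auto)
  fix M1 assume h1: "M1 1 = M 1" "\<forall>a<M 1. M1 a = M a" "\<forall>x. x \<notin> {12,13} \<longrightarrow> vr M1 x = vr M x"
    "vr M1 12 = 0 \<longleftrightarrow> vr M a = vr M u"
  show "sp (ASeq (diff 17 c v) (ASeq (AAdd 12 12 17) (AIf 12 ASkip (AConst 7 1)))) M1 {7, 12, 13, 17}
        (\<lambda>M'. (vr M' 7 \<noteq> 0) = (vr M 7 \<noteq> 0 \<or> vr M a = vr M u \<and> vr M c = vr M v)) 50"
  proof (rule sp_seq[where Wb="{7,12}" and Tb=20])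
    show "sp (diff 17 c v) M1 {17,13} (\<lambda>M'. vr M' 17 = 0 \<longleftrightarrow> vr M1 c = vr M1 v) 30"
      by (rule diff_spec) (use assms h1 in auto)
    fix M2 assume h2: "M2 1 = M1 1" "\<forall>a<M1 1. M2 a = M1 a" "\<forall>x. x \<notin> {17,13} \<longrightarrow> vr M2 x = vr M1 x"
      "vr M2 17 = 0 \<longleftrightarrow> vr M1 c = vr M1 v"
    have e: "vr M2 12 = vr M1 12" "vr M2 7 = vr M 7" "vr M1 c = vr M c" "vr M1 v = vr M v"
      using h1 h2 assms by auto
    show "sp (ASeq (AAdd 12 12 17) (AIf 12 ASkip (AConst 7 1))) M2 {7,12}
        (\<lambda>M'. (vr M' 7 \<noteq> 0) = (vr M 7 \<noteq> 0 \<or> vr M a = vr M u \<and> vr M c = vr M v)) 20"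
      apply (rule sp_intro)
      using h1(4) h2(4) e assms h1(1) h2(1) by auto
  qed auto
qed auto

lemma mb_spec:
  assumes "4 \<le> M 1" "a \<notin> {7,12,13,17}" "c \<notin> {7,12,13,17}" "u \<notin> {7,12,13,17}" "v \<notin> {7,12,13,17}"
  shows "sp (mb a c u v) M {7,12,13,17} (\<lambda>M'. vr M' 7 \<noteq> 0 \<longleftrightarrow> vr M 7 \<noteq> 0 \<or>
      (vr M a = vr M u \<and> vr M c = vr M v) \<or> (vr M a = vr M v \<and> vr M c = vr M u)) 160"
  unfolding mb_def
proof (rule sp_seq[where Wb="{7,12,13,17}" and Tb=80])
  show "sp (mat a c u v) M {7,12,13,17} (\<lambda>M'. vr M' 7 \<noteq> 0 \<longleftrightarrow> vr M 7 \<noteq> 0 \<or> (vr M a = vr M u \<and> vr M c = vr M v)) 80"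
    by (rule mat_spec) (use assms in auto)
  fix M1 assume h1: "M1 1 = M 1" "\<forall>a<M 1. M1 a = M a" "\<forall>x. x \<notin> {7,12,13,17} \<longrightarrow> vr M1 x = vr M x"
    "vr M1 7 \<noteq> 0 \<longleftrightarrow> vr M 7 \<noteq> 0 \<or> (vr M a = vr M u \<and> vr M c = vr M v)"
  have e: "vr M1 a = vr M a" "vr M1 c = vr M c" "vr M1 u = vr M u" "vr M1 v = vr M v"
    using h1 assms by auto
  show "sp (mat a c v u) M1 {7,12,13,17} (\<lambda>M'. vr M' 7 \<noteq> 0 \<longleftrightarrow> vr M 7 \<noteq> 0 \<or>
      (vr M a = vr M u \<and> vr M c = vr M v) \<or> (vr M a = vr M v \<and> vr M c = vr M u)) 80"
    apply (rule sp_mono[OF mat_spec])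
    using assms h1 e by auto
qed auto




definition Inv :: "nat \<Rightarrow> (nat \<times> nat) list \<Rightarrow> (nat \<Rightarrow> nat) \<Rightarrow> bool" where
 "Inv n es M \<longleftrightarrow> M 1 = (if es = [] then 4 else 4 * length es) \<and> vr M 0 = n \<and> vr M 4 = M 1 \<and>
    vr M 14 = 1 \<and> vr M 15 = 2 \<and> vr M 16 = 4 \<and> (vr M 3 \<noteq> 0 \<longleftrightarrow> es \<noteq> []) \<and>
    (es \<noteq> [] \<longrightarrow> vr M 1 = fst (es!0) \<and> vr M 2 = snd (es!0)) \<and>
    (\<forall>i. 1 \<le> i \<and> i < length es \<longrightarrow> M (2+2*i) = fst (es!i) \<and> M (3+2*i) = snd (es!i))"

lemma Inv_inp: "Inv n es M \<Longrightarrow> 1 \<le> i \<Longrightarrow> i < length es \<Longrightarrow> M (2+2*i) = fst (es!i) \<and> M (3+2*i) = snd (es!i)"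
  unfolding Inv_def by blast

lemma Inv_c: "Inv n es M \<Longrightarrow> vr M 14 = 1 \<and> vr M 15 = 2 \<and> vr M 16 = 4 \<and> vr M 0 = n \<and> vr M 4 = M 1"
  unfolding Inv_def by blast

lemma Inv_b: "Inv n es M \<Longrightarrow> M 1 = (if es = [] then 4 else 4 * length es)"
  unfolding Inv_def by blast

lemma Inv_base: "Inv n es M \<Longrightarrow> 4 \<le> M 1"
  unfolding Inv_def by (cases es) auto

lemma Inv_frame:
  assumes "Inv n es M" "M' 1 = M 1" "\<forall>a<M 1. M' a = M a" "\<forall>x. x \<notin> W \<longrightarrow> vr M' x = vr M x"
    "W \<inter> {0,1,2,3,4,14,15,16} = {}"
  shows "Inv n es M'"
proof -
  have lt: "3 + 2*i < M 1" if "i < length es" for i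
    using assms(1) that unfolding Inv_def by (cases es) auto
  have "\<forall>x\<in>{0,1,2,3,4,14,15,16}. vr M' x = vr M x" using assms(4,5) by blast
  then show ?thesis using assms(1-3) lt unfolding Inv_def
    by (auto simp del: One_nat_def)
qed

definition symE :: "(nat \<times> nat) list \<Rightarrow> (nat \<times> nat) set" where
  "symE es = {(x,y). (x,y) \<in> set es \<or> (y,x) \<in> set es}"

definition fe :: "(nat \<times> nat) list \<Rightarrow> nat \<Rightarrow> nat \<Rightarrow> nat \<Rightarrow> bool" where
  "fe es j U V \<longleftrightarrow> (\<exists>i<length es. i \<le> j \<and> (es!i = (U,V) \<or> es!i = (V,U)))"

lemma fe_all: "fe es (length es - 1) U V \<longleftrightarrow> (U,V) \<in> symE es"
  unfolding fe_def symE_def by (auto simp: in_set_conv_nth)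

lemma fe_Suc: "fe es (Suc j) U V \<longleftrightarrow> fe es j U V \<or> (Suc j < length es \<and> (es!Suc j = (U,V) \<or> es!Suc j = (V,U)))"
  unfolding fe_def by (auto simp: le_Suc_eq)

lemma fe_0: "fe es 0 U V \<longleftrightarrow> es \<noteq> [] \<and> (es!0 = (U,V) \<or> es!0 = (V,U))"
  unfolding fe_def by auto

definition body :: "nat \<Rightarrow> nat \<Rightarrow> acom" where
 "body u v = ASeq (ASeq (ALoad 10 8) (ASeq (AAdd 13 8 14) (ALoad 11 13))) (ASeq (mb 10 11 u v) (ASeq (AAdd 8 8 15) (ASub 9 9 16)))"

definition ec :: "nat \<Rightarrow> nat \<Rightarrow> acom" where
 "ec u v = ASeq (ASeq (AConst 7 0) (AIf 3 (mb 1 2 u v) ASkip)) (ASeq (ASeq (ASub 9 4 16) (AConst 8 4)) (AWhile 9 (body u v)))"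

abbreviation "WE \<equiv> {7,8,9,10,11,12,13,17::nat}"

lemma loads_spec:
  assumes "4 \<le> M 1" "vr M 14 = 1" "3 < vr M 8" "vr M 8 + 1 < M 1"
  shows "sp (ASeq (ALoad 10 8) (ASeq (AAdd 13 8 14) (ALoad 11 13))) M {10,11,13}
     (\<lambda>M'. vr M' 10 = M (vr M 8) \<and> vr M' 11 = M (vr M 8 + 1)) 24"
  apply (rule sp_intro) using assms by auto

lemma body_spec:
  assumes "Inv n es M" "u \<ge> 20" "v \<ge> 20" "vr M 8 = 4 + 2*j" "vr M 9 = 4*(length es - 1) - 4*j" "vr M 9 \<noteq> 0"
  shows "sp (body u v) M WE (\<lambda>M'. Inv n es M' \<and> vr M' 8 = 4 + 2*(Suc j) \<and> vr M' 9 = vr M 9 - 4 \<and>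
     vr M' u = vr M u \<and> vr M' v = vr M v \<and>
     (vr M' 7 \<noteq> 0 \<longleftrightarrow> vr M 7 \<noteq> 0 \<or> es!(Suc j) = (vr M u, vr M v) \<or> es!(Suc j) = (vr M v, vr M u))) 204"
proof -
  have j: "Suc j < length es" using assms(5,6) by auto
  have b: "M 1 = 4 * length es" "4 \<le> M 1" using Inv_b[OF assms(1)] j by auto
  have inp: "M (4 + 2*j) = fst (es ! Suc j)" "M (5 + 2*j) = snd (es ! Suc j)"
  proof -
    have "M (2+2*Suc j) = fst (es!Suc j) \<and> M (3+2*Suc j) = snd (es!Suc j)"
      using Inv_inp[OF assms(1) _ j] by simp
    moreover have "2+2*Suc j = 4+2*j" "3+2*Suc j = 5+2*j" by auto
    ultimately show "M (4 + 2*j) = fst (es ! Suc j)" "M (5 + 2*j) = snd (es ! Suc j)" by metis+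
  qed
  have c: "vr M 14 = 1" "vr M 15 = 2" "vr M 16 = 4" using Inv_c[OF assms(1)] by auto
  show ?thesis unfolding body_def
  proof (rule sp_seq[OF loads_spec, where Wb=WE and Tb=180])
    show "4 \<le> M 1" "vr M 14 = 1" "3 < vr M 8" "vr M 8 + 1 < M 1" using b c assms(4) j by simp_all
    fix M1 assume h1: "M1 1 = M 1" "\<forall>a<M 1. M1 a = M a" "\<forall>x. x \<notin> {10,11,13} \<longrightarrow> vr M1 x = vr M x"
      "vr M1 10 = M (vr M 8) \<and> vr M1 11 = M (vr M 8 + 1)"
    show "sp (ASeq (mb 10 11 u v) (ASeq (AAdd 8 8 15) (ASub 9 9 16))) M1 WE
        (\<lambda>M'. Inv n es M' \<and> vr M' 8 = 4 + 2*(Suc j) \<and> vr M' 9 = vr M 9 - 4 \<and>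
     vr M' u = vr M u \<and> vr M' v = vr M v \<and>
     (vr M' 7 \<noteq> 0 \<longleftrightarrow> vr M 7 \<noteq> 0 \<or> es!(Suc j) = (vr M u, vr M v) \<or> es!(Suc j) = (vr M v, vr M u))) 180"
    proof (rule sp_seq[OF mb_spec, where Wb=WE and Tb=20])
      show "4 \<le> M1 1" "10 \<notin> {7, 12, 13, 17::nat}" "11 \<notin> {7, 12, 13, 17::nat}"
        "u \<notin> {7, 12, 13, 17}" "v \<notin> {7, 12, 13, 17}" using b h1(1) assms(2,3) by auto
      fix M2 assume h2: "M2 1 = M1 1" "\<forall>a<M1 1. M2 a = M1 a" "\<forall>x. x \<notin> {7, 12, 13, 17} \<longrightarrow> vr M2 x = vr M1 x"
        "vr M2 7 \<noteq> 0 \<longleftrightarrow> vr M1 7 \<noteq> 0 \<or> (vr M1 10 = vr M1 u \<and> vr M1 11 = vr M1 v) \<or> (vr M1 10 = vr M1 v \<and> vr M1 11 = vr M1 u)"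
      have i2: "Inv n es M2"
        by (rule Inv_frame[OF Inv_frame[OF assms(1) h1(1-3)] h2(1-3)]) auto
      have e1: "vr M2 x = vr M1 x" if "x \<notin> {7,12,13,17}" for x using h2(3) that by blast
      have e2: "vr M1 x = vr M x" if "x \<notin> {10,11,13}" for x using h1(3) that by blast
      have e: "vr M2 8 = vr M 8" "vr M2 9 = vr M 9" "vr M2 15 = 2" "vr M2 16 = 4" "vr M2 u = vr M u" "vr M2 v = vr M v"
        "vr M1 7 = vr M 7" "vr M1 u = vr M u" "vr M1 v = vr M v"
        using c assms(2,3) e1[of 8] e2[of 8] e1[of 9] e2[of 9] e1[of 15] e2[of 15] e1[of 16] e2[of 16]
          e1[of u] e2[of u] e1[of v] e2[of v] e2[of 7] by simp_all
      have g: "vr M1 10 = fst (es!Suc j)" "vr M1 11 = snd (es!Suc j)"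
        using h1(4) assms(4) inp by (simp_all add: add.commute)
      have f: "vr M2 7 \<noteq> 0 \<longleftrightarrow> vr M 7 \<noteq> 0 \<or> es!(Suc j) = (vr M u, vr M v) \<or> es!(Suc j) = (vr M v, vr M u)"
        using h2(4) g e by (cases "es!Suc j") auto
      show "sp (ASeq (AAdd 8 8 15) (ASub 9 9 16)) M2 WE
        (\<lambda>M'. Inv n es M' \<and> vr M' 8 = 4 + 2*(Suc j) \<and> vr M' 9 = vr M 9 - 4 \<and>
     vr M' u = vr M u \<and> vr M' v = vr M v \<and>
     (vr M' 7 \<noteq> 0 \<longleftrightarrow> vr M 7 \<noteq> 0 \<or> es!(Suc j) = (vr M u, vr M v) \<or> es!(Suc j) = (vr M v, vr M u))) 20"
      proof (rule sp_mono[OF sp_intro[where P="\<lambda>M'. vr M' 8 = 4 + 2*(Suc j) \<and> vr M' 9 = vr M 9 - 4" and T=20 and W="{8,9}"]])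
        show "tot (ASeq (AAdd 8 8 15) (ASub 9 9 16)) M2 (\<lambda>t M'. (vr M' 8 = 4 + 2 * Suc j \<and> vr M' 9 = vr M 9 - 4) \<and> t \<le> 20)"
          using e assms(4) by simp
        show "4 \<le> M2 1" using h1(1) h2(1) b by simp
        fix M' assume h3: "M' 1 = M2 1" "\<forall>a<M2 1. M' a = M2 a" "\<forall>x. x \<notin> {8,9} \<longrightarrow> vr M' x = vr M2 x"
          "vr M' 8 = 4 + 2*(Suc j) \<and> vr M' 9 = vr M 9 - 4"
        have "Inv n es M'" by (rule Inv_frame[OF i2 h3(1-3)]) auto
        then show "Inv n es M' \<and> vr M' 8 = 4 + 2*(Suc j) \<and> vr M' 9 = vr M 9 - 4 \<and>
     vr M' u = vr M u \<and> vr M' v = vr M v \<and>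
     (vr M' 7 \<noteq> 0 \<longleftrightarrow> vr M 7 \<noteq> 0 \<or> es!(Suc j) = (vr M u, vr M v) \<or> es!(Suc j) = (vr M v, vr M u))"
          using h3(4) e f assms(2,3) h3(3)[rule_format, of u] h3(3)[rule_format, of v] h3(3)[rule_format, of 7] by simp
      qed auto
    qed auto
  qed auto
qed

lemma fe_ge: "length es - 1 \<le> j \<Longrightarrow> fe es j U V \<longleftrightarrow> (U,V) \<in> symE es"
  unfolding fe_def symE_def by (auto simp: in_set_conv_nth)

lemma Inv_3: "Inv n es M \<Longrightarrow> (vr M 3 \<noteq> 0 \<longleftrightarrow> es \<noteq> []) \<and> (es \<noteq> [] \<longrightarrow> vr M 1 = fst (es!0) \<and> vr M 2 = snd (es!0))"
  unfolding Inv_def by blast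

lemma ecA_spec:
  assumes "Inv n es M" "u \<ge> 20" "v \<ge> 20"
  shows "sp (ASeq (AConst 7 0) (AIf 3 (mb 1 2 u v) ASkip)) M {7,12,13,17} (\<lambda>M'. vr M' 7 \<noteq> 0 \<longleftrightarrow> fe es 0 (vr M u) (vr M v)) 169"
proof (rule sp_seq[where Wa="{7}" and Pa="\<lambda>M'. vr M' 7 = 0" and Ta=4 and Wb="{7,12,13,17}" and Tb=165])
  have b: "4 \<le> M 1" using Inv_base[OF assms(1)] .
  show "sp (AConst 7 0) M {7} (\<lambda>M'. vr M' 7 = 0) 4" by (rule sp_intro) (use b in auto)
  fix M1 assume h1: "M1 1 = M 1" "\<forall>a<M 1. M1 a = M a" "\<forall>x. x \<notin> {7} \<longrightarrow> vr M1 x = vr M x" "vr M1 7 = 0"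
  have e: "vr M1 1 = vr M 1" "vr M1 2 = vr M 2" "vr M1 3 = vr M 3" "vr M1 u = vr M u" "vr M1 v = vr M v"
    using h1(3)[rule_format, of 1] h1(3)[rule_format, of 2] h1(3)[rule_format, of 3] h1(3)[rule_format, of u] h1(3)[rule_format, of v] assms(2,3) by auto
  have i3: "(vr M 3 \<noteq> 0 \<longleftrightarrow> es \<noteq> []) \<and> (es \<noteq> [] \<longrightarrow> vr M 1 = fst (es!0) \<and> vr M 2 = snd (es!0))"
    by (rule Inv_3[OF assms(1)])
  show "sp (AIf 3 (mb 1 2 u v) ASkip) M1 {7,12,13,17} (\<lambda>M'. vr M' 7 \<noteq> 0 \<longleftrightarrow> fe es 0 (vr M u) (vr M v)) 165"
  proof (rule sp_if[where T=160])
    assume "vr M1 3 \<noteq> 0"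
    then have ne: "es \<noteq> []" using e i3 by auto
    show "sp (mb 1 2 u v) M1 {7,12,13,17} (\<lambda>M'. vr M' 7 \<noteq> 0 \<longleftrightarrow> fe es 0 (vr M u) (vr M v)) 160"
      apply (rule sp_mono[OF mb_spec])
      using b h1(1) assms(2,3) apply auto[5]
        apply auto[2]
      using ne i3 e h1(4) by (cases "es!0") (auto simp: fe_0)
  next
    assume "vr M1 3 = 0"
    then have ne: "es = []" using e i3 by auto
    show "sp ASkip M1 {7,12,13,17} (\<lambda>M'. vr M' 7 \<noteq> 0 \<longleftrightarrow> fe es 0 (vr M u) (vr M v)) 160"
      apply (rule sp_mono[OF sp_skip]) using ne h1(4) by (auto simp: fe_0)
  qed auto
qed auto

lemma ecB_spec:
  assumes "Inv n es M"
  shows "sp (ASeq (ASub 9 4 16) (AConst 8 4)) M {8,9} (\<lambda>M'. vr M' 9 = 4 * (length es - 1) \<and> vr M' 8 = 4) 14"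
proof -
  have c: "vr M 16 = 4" "vr M 4 = M 1" "M 1 = (if es = [] then 4 else 4 * length es)" "4 \<le> M 1"
    using Inv_c[OF assms] Inv_b[OF assms] Inv_base[OF assms] by auto
  have "M 1 - 4 = 4 * (length es - 1)" using c(3) by (cases es) auto
  then show ?thesis apply (rule_tac sp_intro) using c by auto
qed

lemma ec_spec:
  assumes "Inv n es M" "u \<ge> 20" "v \<ge> 20"
  shows "sp (ec u v) M WE (\<lambda>M'. Inv n es M' \<and> vr M' u = vr M u \<and> vr M' v = vr M v \<and>
      (vr M' 7 \<noteq> 0 \<longleftrightarrow> (vr M u, vr M v) \<in> symE es)) (1000 * (length es + 1))"
  unfolding ec_def
proof (rule sp_seq[OF ecA_spec[OF assms], where Wb=WE and Tb="14 + (209 * (4 * (length es - 1)) + 4)"])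
  fix M1 assume h1: "M1 1 = M 1" "\<forall>a<M 1. M1 a = M a" "\<forall>x. x \<notin> {7,12,13,17} \<longrightarrow> vr M1 x = vr M x"
    "vr M1 7 \<noteq> 0 \<longleftrightarrow> fe es 0 (vr M u) (vr M v)"
  have i1: "Inv n es M1" by (rule Inv_frame[OF assms(1) h1(1-3)]) auto
  have e1: "vr M1 u = vr M u" "vr M1 v = vr M v" using h1(3)[rule_format, of u] h1(3)[rule_format, of v] assms(2,3) by auto
  show "sp (ASeq (ASeq (ASub 9 4 16) (AConst 8 4)) (AWhile 9 (body u v))) M1 WE
     (\<lambda>M'. Inv n es M' \<and> vr M' u = vr M u \<and> vr M' v = vr M v \<and>
      (vr M' 7 \<noteq> 0 \<longleftrightarrow> (vr M u, vr M v) \<in> symE es)) (14 + (209 * (4 * (length es - 1)) + 4))"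
  proof (rule sp_seq[OF ecB_spec[OF i1], where Wb=WE and Tb="209 * (4 * (length es - 1)) + 4"])
    fix M2 assume h2: "M2 1 = M1 1" "\<forall>a<M1 1. M2 a = M1 a" "\<forall>x. x \<notin> {8,9} \<longrightarrow> vr M2 x = vr M1 x"
      "vr M2 9 = 4 * (length es - 1) \<and> vr M2 8 = 4"
    have i2: "Inv n es M2" by (rule Inv_frame[OF i1 h2(1-3)]) auto
    have e2: "vr M2 u = vr M u" "vr M2 v = vr M v" "vr M2 7 = vr M1 7"
      using h2(3)[rule_format, of u] h2(3)[rule_format, of v] h2(3)[rule_format, of 7] assms(2,3) e1 by auto
    define I where "I = (\<lambda>M'. Inv n es M' \<and> vr M' u = vr M u \<and> vr M' v = vr M v \<and>
       (\<exists>j. vr M' 8 = 4 + 2*j \<and> vr M' 9 = 4*(length es - 1) - 4*j \<and> (vr M' 7 \<noteq> 0 \<longleftrightarrow> fe es j (vr M u) (vr M v))))"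
    have I2: "I M2" unfolding I_def using i2 e2 h2(4) h1(4) by (auto intro!: exI[of _ 0])
    have "sp (AWhile 9 (body u v)) M2 WE (\<lambda>M'. I M' \<and> vr M' 9 = 0) (209 * (4 * (length es - 1)) + 4)"
    proof (rule sp_while[where f="\<lambda>M'. vr M' 9" and B=204])
      fix M' assume a: "I M'" "vr M' 9 \<noteq> 0" "M' 1 = M2 1"
      then obtain j where j: "Inv n es M'" "vr M' u = vr M u" "vr M' v = vr M v" "vr M' 8 = 4 + 2*j"
        "vr M' 9 = 4*(length es - 1) - 4*j" "vr M' 7 \<noteq> 0 \<longleftrightarrow> fe es j (vr M u) (vr M v)"
        unfolding I_def by blast
      have jl: "Suc j < length es" using j(5) a(2) by auto
      show "sp (body u v) M' WE (\<lambda>M''. I M'' \<and> vr M'' 9 < vr M' 9) 204"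
        apply (rule sp_mono[OF body_spec[OF j(1) assms(2,3) j(4) j(5) a(2)]])
          apply auto[2]
        unfolding I_def using j jl a(2) apply clarsimp
        apply (intro conjI exI[of _ "Suc j"])
        by (auto simp: fe_Suc)
    qed (use I2 h2(4) in auto)
    then show "sp (AWhile 9 (body u v)) M2 WE (\<lambda>M'. Inv n es M' \<and> vr M' u = vr M u \<and> vr M' v = vr M v \<and>
      (vr M' 7 \<noteq> 0 \<longleftrightarrow> (vr M u, vr M v) \<in> symE es)) (209 * (4 * (length es - 1)) + 4)"
      apply (rule sp_mono) apply auto[2]
      unfolding I_def using fe_ge by auto
  qed auto
qed auto

fun checkL :: "(nat \<times> nat) list \<Rightarrow> acom" where
  "checkL [] = ASkip"
| "checkL ((i,j)#r) = ASeq (ec (20+2*i) (20+2*j)) (ASeq (AIf 7 ASkip (AConst 6 0)) (checkL r))"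

definition checkT :: "(nat \<times> nat) list \<Rightarrow> acom" where
  "checkT L = ASeq (AConst 6 1) (ASeq (checkL L) (AIf 6 (AConst 5 1) ASkip))"

abbreviation "WC \<equiv> {6,7,8,9,10,11,12,13,17::nat}"

lemma checkL_spec:
  assumes "Inv n es M"
  shows "sp (checkL L) M WC (\<lambda>M'. Inv n es M' \<and> (vr M' 6 \<noteq> 0 \<longleftrightarrow> vr M 6 \<noteq> 0 \<and>
     (\<forall>(i,j)\<in>set L. (vr M (20+2*i), vr M (20+2*j)) \<in> symE es))) (length L * (1000 * (length es + 1) + 10))"
  using assms
proof (induction L arbitrary: M)
  case Nil
  then show ?case by (auto intro: sp_mono[OF sp_skip])
next
  case (Cons p L)
  obtain i j where p: "p = (i,j)" by (cases p)
  let ?T = "length L * (1000 * (length es + 1) + 10)"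
  show ?case unfolding p checkL.simps
  proof (rule sp_seq[OF ec_spec[OF Cons.prems], where Wb=WC and Tb="5 + (4 + ?T)"])
    show "20 \<le> 20 + 2*i" "20 \<le> 20 + 2*j" by auto
    fix M1 assume h1: "M1 1 = M 1" "\<forall>a<M 1. M1 a = M a" "\<forall>x. x \<notin> WE \<longrightarrow> vr M1 x = vr M x"
      "Inv n es M1 \<and> vr M1 (20 + 2 * i) = vr M (20 + 2 * i) \<and> vr M1 (20 + 2 * j) = vr M (20 + 2 * j) \<and>
       (vr M1 7 \<noteq> 0) = ((vr M (20 + 2 * i), vr M (20 + 2 * j)) \<in> symE es)"
    have b1: "4 \<le> M1 1" using Inv_base h1(4) by blast
    show "sp (ASeq (AIf 7 ASkip (AConst 6 0)) (checkL L)) M1 WC (\<lambda>M'. Inv n es M' \<and> (vr M' 6 \<noteq> 0 \<longleftrightarrow> vr M 6 \<noteq> 0 \<and>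
     (\<forall>(i,j)\<in>set ((i,j)#L). (vr M (20+2*i), vr M (20+2*j)) \<in> symE es))) (5 + (4 + ?T))"
    proof (rule sp_seq[where Wa="{6}" and Ta="9" and Pa="\<lambda>M'. vr M' 6 \<noteq> 0 \<longleftrightarrow> vr M1 6 \<noteq> 0 \<and> vr M1 7 \<noteq> 0"
          and Wb=WC and Tb="?T"])
      show "sp (AIf 7 ASkip (AConst 6 0)) M1 {6} (\<lambda>M'. vr M' 6 \<noteq> 0 \<longleftrightarrow> vr M1 6 \<noteq> 0 \<and> vr M1 7 \<noteq> 0) 9"
        by (rule sp_intro) (use b1 in auto)
      fix M2 assume h2: "M2 1 = M1 1" "\<forall>a<M1 1. M2 a = M1 a" "\<forall>x. x \<notin> {6} \<longrightarrow> vr M2 x = vr M1 x"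
         "vr M2 6 \<noteq> 0 \<longleftrightarrow> vr M1 6 \<noteq> 0 \<and> vr M1 7 \<noteq> 0"
      have i2: "Inv n es M2" by (rule Inv_frame[OF _ h2(1-3)]) (use h1(4) in auto)
      have e: "vr M1 6 = vr M 6" "\<forall>x\<in>set L. vr M2 (20 + 2 * fst x) = vr M (20 + 2 * fst x) \<and> vr M2 (20 + 2 * snd x) = vr M (20 + 2 * snd x)"
        using h1(3) h2(3) by auto
      show "sp (checkL L) M2 WC (\<lambda>M'. Inv n es M' \<and> (vr M' 6 \<noteq> 0 \<longleftrightarrow> vr M 6 \<noteq> 0 \<and>
       (\<forall>(i,j)\<in>set ((i,j)#L). (vr M (20+2*i), vr M (20+2*j)) \<in> symE es))) ?T"
        apply (rule sp_mono[OF Cons.IH[OF i2]]) apply auto[2]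
        using h2(4) h1(4) e by fastforce
    qed auto
  qed (auto simp: algebra_simps)
qed

definition tupOK :: "(nat \<times> nat) list \<Rightarrow> (nat \<times> nat) list \<Rightarrow> (nat \<Rightarrow> nat) \<Rightarrow> bool" where
  "tupOK es L \<tau> \<longleftrightarrow> (\<forall>(a,b)\<in>set L. (\<tau> a, \<tau> b) \<in> symE es)"

lemma checkT_spec:
  assumes "Inv n es M"
  shows "sp (checkT L) M (insert 5 WC) (\<lambda>M'. Inv n es M' \<and> (vr M' 5 \<noteq> 0 \<longleftrightarrow> vr M 5 \<noteq> 0 \<or>
     tupOK es L (\<lambda>j. vr M (20+2*j)))) (length L * (1000 * (length es + 1) + 10) + 13)"
  unfolding checkT_def
proof (rule sp_seq[where Wa="{6}" and Ta=4 and Pa="\<lambda>M'. vr M' 6 = 1" and Wb="insert 5 WC"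
      and Tb="length L * (1000 * (length es + 1) + 10) + 9"])
  have b: "4 \<le> M 1" by (rule Inv_base[OF assms])
  show "sp (AConst 6 1) M {6} (\<lambda>M'. vr M' 6 = 1) 4" by (rule sp_intro) (use b in auto)
  fix M1 assume h1: "M1 1 = M 1" "\<forall>a<M 1. M1 a = M a" "\<forall>x. x \<notin> {6} \<longrightarrow> vr M1 x = vr M x" "vr M1 6 = 1"
  have i1: "Inv n es M1" by (rule Inv_frame[OF assms h1(1-3)]) auto
  show "sp (ASeq (checkL L) (AIf 6 (AConst 5 1) ASkip)) M1 (insert 5 WC) (\<lambda>M'. Inv n es M' \<and> (vr M' 5 \<noteq> 0 \<longleftrightarrow> vr M 5 \<noteq> 0 \<or>
     tupOK es L (\<lambda>j. vr M (20+2*j)))) (length L * (1000 * (length es + 1) + 10) + 9)"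
  proof (rule sp_seq[OF checkL_spec[OF i1], where Wb="{5}" and Tb=9])
    fix M2 assume h2: "M2 1 = M1 1" "\<forall>a<M1 1. M2 a = M1 a" "\<forall>x. x \<notin> WC \<longrightarrow> vr M2 x = vr M1 x"
      "Inv n es M2 \<and> (vr M2 6 \<noteq> 0 \<longleftrightarrow> vr M1 6 \<noteq> 0 \<and> (\<forall>(i,j)\<in>set L. (vr M1 (20+2*i), vr M1 (20+2*j)) \<in> symE es))"
    have b2: "4 \<le> M2 1" using Inv_base h2(4) by blast
    have e: "vr M2 5 = vr M 5" "\<forall>x\<in>set L. vr M1 (20 + 2 * fst x) = vr M (20 + 2 * fst x) \<and> vr M1 (20 + 2 * snd x) = vr M (20 + 2 * snd x)"
      using h1(3) h2(3) by auto
    have ok: "vr M2 6 \<noteq> 0 \<longleftrightarrow> tupOK es L (\<lambda>j. vr M (20+2*j))"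
      using h2(4) h1(4) e unfolding tupOK_def by fastforce
    show "sp (AIf 6 (AConst 5 1) ASkip) M2 {5} (\<lambda>M'. Inv n es M' \<and> (vr M' 5 \<noteq> 0 \<longleftrightarrow> vr M 5 \<noteq> 0 \<or>
     tupOK es L (\<lambda>j. vr M (20+2*j)))) 9"
    proof (rule sp_mono[OF sp_intro[where P="\<lambda>M'. vr M' 5 \<noteq> 0 \<longleftrightarrow> vr M 5 \<noteq> 0 \<or> tupOK es L (\<lambda>j. vr M (20+2*j))"
          and T=9 and W="{5}"]])
      show "tot (AIf 6 (AConst 5 1) ASkip) M2 (\<lambda>t M'. (vr M' 5 \<noteq> 0 \<longleftrightarrow> vr M 5 \<noteq> 0 \<or> tupOK es L (\<lambda>j. vr M (20+2*j))) \<and> t \<le> 9)"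
        using ok e b2 by auto
      fix M' assume "M' 1 = M2 1" "\<forall>a<M2 1. M' a = M2 a" "\<forall>x. x \<notin> {5} \<longrightarrow> vr M' x = vr M2 x"
        "vr M' 5 \<noteq> 0 \<longleftrightarrow> vr M 5 \<noteq> 0 \<or> tupOK es L (\<lambda>j. vr M (20+2*j))"
      moreover have "Inv n es M'" by (rule Inv_frame[OF _ calculation(1-3)]) (use h2(4) in auto)
      ultimately show "Inv n es M' \<and> (vr M' 5 \<noteq> 0 \<longleftrightarrow> vr M 5 \<noteq> 0 \<or> tupOK es L (\<lambda>j. vr M (20+2*j)))" by simp
    qed (use b2 in auto)
  qed auto
qed auto




primrec nest :: "nat \<Rightarrow> nat \<Rightarrow> (nat \<times> nat) list \<Rightarrow> acom" where
  "nest 0 i L = checkT L"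
| "nest (Suc d) i L = ASeq (ASeq (AConst (20+2*i) 0) (ASub (21+2*i) 0 (20+2*i)))
     (AWhile (21+2*i) (ASeq (nest d (Suc i) L) (ASeq (AAdd (20+2*i) (20+2*i) 14) (ASub (21+2*i) 0 (20+2*i)))))"

primrec tn :: "nat \<Rightarrow> nat \<Rightarrow> nat \<Rightarrow> nat" where
  "tn TC n 0 = TC"
| "tn TC n (Suc d) = 18 + (tn TC n d + 25) * n"

definition Wn :: "nat \<Rightarrow> nat set" where "Wn i = insert 5 WC \<union> {x. 20 + 2*i \<le> x}"

lemma tupOK_cong: "(\<forall>(a,b)\<in>set L. \<tau> a = \<tau>' a \<and> \<tau> b = \<tau>' b) \<Longrightarrow> tupOK es L \<tau> = tupOK es L \<tau>'"
  unfolding tupOK_def by (rule ball_cong[OF refl]) (auto split: prod.splits)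

lemma ex_prefix_Suc: "(\<exists>\<tau>::nat\<Rightarrow>nat. (\<forall>j<Suc i. \<tau> j = g j) \<and> C \<tau>) \<longleftrightarrow> (\<exists>\<tau>. (\<forall>j<i. \<tau> j = g j) \<and> \<tau> i = g i \<and> C \<tau>)"
  by (simp add: less_Suc_eq conj_disj_distribR all_conj_distrib)

lemma ex_less_Suc: "(\<exists>\<tau>::nat\<Rightarrow>nat. A \<tau> \<and> \<tau> i < Suc v \<and> B \<tau>) \<longleftrightarrow> (\<exists>\<tau>. A \<tau> \<and> \<tau> i < v \<and> B \<tau>) \<or> (\<exists>\<tau>. A \<tau> \<and> \<tau> i = v \<and> B \<tau>)"
  using less_Suc_eq by blast

lemma range_split: "i < k \<Longrightarrow> (\<forall>j. i \<le> j \<and> j < k \<longrightarrow> P j) \<longleftrightarrow> P i \<and> (\<forall>j. Suc i \<le> j \<and> j < k \<longrightarrow> P j)"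
  by (metis Suc_le_eq le_eq_less_or_eq order_refl)

lemma nest_spec:
  assumes "Inv n es M" "\<forall>(a,b)\<in>set L. a < i + d \<and> b < i + d"
  shows "sp (nest d i L) M (Wn i) (\<lambda>M'. Inv n es M' \<and> (vr M' 5 \<noteq> 0 \<longleftrightarrow> vr M 5 \<noteq> 0 \<or>
     (\<exists>\<tau>. (\<forall>j<i. \<tau> j = vr M (20+2*j)) \<and> (\<forall>j. i \<le> j \<and> j < i + d \<longrightarrow> \<tau> j < n) \<and> tupOK es L \<tau>)))
     (tn (length L * (1000 * (length es + 1) + 10) + 13) n d)"
  using assms
proof (induction d arbitrary: i M)
  case 0
  show ?case unfolding nest.simps tn.simps
    apply (rule sp_mono[OF checkT_spec[OF 0(1)]])
      apply (auto simp: Wn_def)[2]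
  proof -
    fix M' assume "Inv n es M' \<and> (vr M' 5 \<noteq> 0 \<longleftrightarrow> vr M 5 \<noteq> 0 \<or> tupOK es L (\<lambda>j. vr M (20+2*j)))"
    moreover have "tupOK es L (\<lambda>j. vr M (20+2*j)) \<longleftrightarrow>
       (\<exists>\<tau>. (\<forall>j<i. \<tau> j = vr M (20+2*j)) \<and> (\<forall>j. i \<le> j \<and> j < i + 0 \<longrightarrow> \<tau> j < n) \<and> tupOK es L \<tau>)"
    proof
      assume "tupOK es L (\<lambda>j. vr M (20+2*j))" then show "\<exists>\<tau>. (\<forall>j<i. \<tau> j = vr M (20+2*j)) \<and> (\<forall>j. i \<le> j \<and> j < i + 0 \<longrightarrow> \<tau> j < n) \<and> tupOK es L \<tau>"
        by auto
    next
      assume "\<exists>\<tau>. (\<forall>j<i. \<tau> j = vr M (20+2*j)) \<and> (\<forall>j. i \<le> j \<and> j < i + 0 \<longrightarrow> \<tau> j < n) \<and> tupOK es L \<tau>"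
      then obtain \<tau> where t: "\<forall>j<i. \<tau> j = vr M (20+2*j)" "tupOK es L \<tau>" by blast
      have "tupOK es L \<tau> = tupOK es L (\<lambda>j. vr M (20+2*j))"
        by (rule tupOK_cong) (use t(1) 0(2) in auto)
      then show "tupOK es L (\<lambda>j. vr M (20+2*j))" using t(2) by simp
    qed
    ultimately show "Inv n es M' \<and> (vr M' 5 \<noteq> 0 \<longleftrightarrow> vr M 5 \<noteq> 0 \<or>
     (\<exists>\<tau>. (\<forall>j<i. \<tau> j = vr M (20+2*j)) \<and> (\<forall>j. i \<le> j \<and> j < i + 0 \<longrightarrow> \<tau> j < n) \<and> tupOK es L \<tau>))" by simp
  qed
next
  case (Suc d)
  let ?TC = "length L * (1000 * (length es + 1) + 10) + 13"
  let ?F = "\<lambda>v. \<exists>\<tau>. (\<forall>j<i. \<tau> j = vr M (20+2*j)) \<and> \<tau> i < v \<and> (\<forall>j. Suc i \<le> j \<and> j < i + Suc d \<longrightarrow> \<tau> j < n) \<and> tupOK es L \<tau>"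
  define I where "I = (\<lambda>M'. Inv n es M' \<and> (\<forall>j<i. vr M' (20+2*j) = vr M (20+2*j)) \<and>
     (\<exists>v\<le>n. vr M' (20+2*i) = v \<and> vr M' (21+2*i) = n - v \<and> (vr M' 5 \<noteq> 0 \<longleftrightarrow> vr M 5 \<noteq> 0 \<or> ?F v)))"
  have b: "4 \<le> M 1" by (rule Inv_base[OF Suc.prems(1)])
  have c: "vr M 0 = n" "vr M 14 = 1" using Inv_c[OF Suc.prems(1)] by auto
  show ?case unfolding nest.simps tn.simps
  proof (rule sp_seq[where Wa="{20+2*i, 21+2*i}" and Ta=14 and Pa="\<lambda>M'. vr M' (20+2*i) = 0 \<and> vr M' (21+2*i) = n"
        and Wb="Wn i" and Tb="(tn ?TC n d + 25) * n + 4"])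
    show "sp (ASeq (AConst (20 + 2 * i) 0) (ASub (21 + 2 * i) 0 (20 + 2 * i))) M {20 + 2 * i, 21 + 2 * i}
        (\<lambda>M'. vr M' (20 + 2 * i) = 0 \<and> vr M' (21 + 2 * i) = n) 14"
      by (rule sp_intro) (use b c in auto)
    fix M1 assume h1: "M1 1 = M 1" "\<forall>a<M 1. M1 a = M a" "\<forall>x. x \<notin> {20+2*i, 21+2*i} \<longrightarrow> vr M1 x = vr M x"
      "vr M1 (20 + 2 * i) = 0 \<and> vr M1 (21 + 2 * i) = n"
    have i1: "Inv n es M1" by (rule Inv_frame[OF Suc.prems(1) h1(1-3)]) auto
    have I1: "I M1" unfolding I_def using i1 h1(3,4) by auto
    have "sp (AWhile (21 + 2 * i) (ASeq (nest d (Suc i) L) (ASeq (AAdd (20 + 2 * i) (20 + 2 * i) 14) (ASub (21 + 2 * i) 0 (20 + 2 * i)))))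
        M1 (Wn i) (\<lambda>M'. I M' \<and> vr M' (21+2*i) = 0) ((tn ?TC n d + 25) * n + 4)"
    proof (rule sp_while[where f="\<lambda>M'. vr M' (21+2*i)" and B="tn ?TC n d + 20"])
      show "I M1" by (rule I1)
      show "(tn ?TC n d + 20 + 5) * vr M1 (21 + 2 * i) + 4 \<le> (tn ?TC n d + 25) * n + 4" using h1(4) by simp
      fix M' assume a: "I M'" "vr M' (21 + 2 * i) \<noteq> 0" "M' 1 = M1 1"
      from a(1) obtain v where v: "Inv n es M'" "\<forall>j<i. vr M' (20+2*j) = vr M (20+2*j)" "v \<le> n"
        "vr M' (20+2*i) = v" "vr M' (21+2*i) = n - v" "vr M' 5 \<noteq> 0 \<longleftrightarrow> vr M 5 \<noteq> 0 \<or> ?F v"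
        unfolding I_def by blast
      have vn: "v < n" using a(2) v(5) by simp
      have cm: "vr M' 0 = n" "vr M' 14 = 1" using Inv_c[OF v(1)] by auto
      have bm: "4 \<le> M' 1" by (rule Inv_base[OF v(1)])
      show "sp (ASeq (nest d (Suc i) L) (ASeq (AAdd (20 + 2 * i) (20 + 2 * i) 14) (ASub (21 + 2 * i) 0 (20 + 2 * i))))
          M' (Wn i) (\<lambda>M''. I M'' \<and> vr M'' (21+2*i) < vr M' (21+2*i)) (tn ?TC n d + 20)"
      proof (rule sp_seq[OF Suc.IH[OF v(1)], where Wb="{20+2*i, 21+2*i}" and Tb=20])
        show "\<forall>(a, b)\<in>set L. a < Suc i + d \<and> b < Suc i + d" using Suc.prems(2) by auto
        show "Wn (Suc i) \<union> {20 + 2 * i, 21 + 2 * i} \<subseteq> Wn i" by (auto simp: Wn_def)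
        fix M2 assume h2: "M2 1 = M' 1" "\<forall>a<M' 1. M2 a = M' a" "\<forall>x. x \<notin> Wn (Suc i) \<longrightarrow> vr M2 x = vr M' x"
          "Inv n es M2 \<and> (vr M2 5 \<noteq> 0 \<longleftrightarrow> vr M' 5 \<noteq> 0 \<or>
          (\<exists>\<tau>. (\<forall>j<Suc i. \<tau> j = vr M' (20+2*j)) \<and> (\<forall>j. Suc i \<le> j \<and> j < Suc i + d \<longrightarrow> \<tau> j < n) \<and> tupOK es L \<tau>))"
        have e2: "\<forall>j\<le>i. vr M2 (20+2*j) = vr M' (20+2*j)" "vr M2 (21+2*i) = vr M' (21+2*i)"
          using h2(3) by (auto simp: Wn_def)
        have F: "vr M2 5 \<noteq> 0 \<longleftrightarrow> vr M 5 \<noteq> 0 \<or> ?F (Suc v)"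
        proof -
          have "(\<exists>\<tau>. (\<forall>j<Suc i. \<tau> j = vr M' (20+2*j)) \<and> (\<forall>j. Suc i \<le> j \<and> j < Suc i + d \<longrightarrow> \<tau> j < n) \<and> tupOK es L \<tau>)
              \<longleftrightarrow> (\<exists>\<tau>. (\<forall>j<i. \<tau> j = vr M (20+2*j)) \<and> \<tau> i = v \<and> (\<forall>j. Suc i \<le> j \<and> j < i + Suc d \<longrightarrow> \<tau> j < n) \<and> tupOK es L \<tau>)"
            unfolding ex_prefix_Suc using v(2,4) by (simp add: conj_assoc cong: conj_cong)
          moreover have "?F (Suc v) \<longleftrightarrow> ?F v \<or> (\<exists>\<tau>. (\<forall>j<i. \<tau> j = vr M (20+2*j)) \<and> \<tau> i = v \<and> (\<forall>j. Suc i \<le> j \<and> j < i + Suc d \<longrightarrow> \<tau> j < n) \<and> tupOK es L \<tau>)"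
            by (rule ex_less_Suc)
          ultimately show ?thesis using h2(4) v(6) by blast
        qed
        have i2: "Inv n es M2" using h2(4) by blast
        have c2: "vr M2 0 = n" "vr M2 14 = 1" "4 \<le> M2 1" using Inv_c[OF i2] Inv_base[OF i2] by auto
        show "sp (ASeq (AAdd (20 + 2 * i) (20 + 2 * i) 14) (ASub (21 + 2 * i) 0 (20 + 2 * i))) M2 {20 + 2 * i, 21 + 2 * i}
            (\<lambda>M''. I M'' \<and> vr M'' (21+2*i) < vr M' (21+2*i)) 20"
        proof (rule sp_mono[OF sp_intro[where P="\<lambda>M''. vr M'' (20+2*i) = Suc v \<and> vr M'' (21+2*i) = n - Suc v"
              and T=20 and W="{20 + 2 * i, 21 + 2 * i}"]])
          show "tot (ASeq (AAdd (20 + 2 * i) (20 + 2 * i) 14) (ASub (21 + 2 * i) 0 (20 + 2 * i))) M2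
              (\<lambda>t M''. (vr M'' (20+2*i) = Suc v \<and> vr M'' (21+2*i) = n - Suc v) \<and> t \<le> 20)"
            using c2 e2 v(4) by auto
          fix M3 assume h3: "M3 1 = M2 1" "\<forall>a<M2 1. M3 a = M2 a" "\<forall>x. x \<notin> {20 + 2 * i, 21 + 2 * i} \<longrightarrow> vr M3 x = vr M2 x"
            "vr M3 (20+2*i) = Suc v \<and> vr M3 (21+2*i) = n - Suc v"
          have i3: "Inv n es M3" by (rule Inv_frame[OF i2 h3(1-3)]) auto
          have e3: "\<forall>j<i. vr M3 (20+2*j) = vr M (20+2*j)" "vr M3 5 = vr M2 5"
            using h3(3) e2(1) v(2) by auto
          show "I M3 \<and> vr M3 (21+2*i) < vr M' (21+2*i)"
            unfolding I_def using i3 e3 h3(4) F vn v(5) by auto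
        qed (use c2 in auto)
      qed simp
    qed
    then show "sp (AWhile (21 + 2 * i) (ASeq (nest d (Suc i) L) (ASeq (AAdd (20 + 2 * i) (20 + 2 * i) 14) (ASub (21 + 2 * i) 0 (20 + 2 * i)))))
        M1 (Wn i) (\<lambda>M'. Inv n es M' \<and> (vr M' 5 \<noteq> 0 \<longleftrightarrow> vr M 5 \<noteq> 0 \<or>
     (\<exists>\<tau>. (\<forall>j<i. \<tau> j = vr M (20+2*j)) \<and> (\<forall>j. i \<le> j \<and> j < i + Suc d \<longrightarrow> \<tau> j < n) \<and> tupOK es L \<tau>)))
     ((tn ?TC n d + 25) * n + 4)"
    proof (rule sp_mono[OF _ subset_refl order_refl])
      fix M' assume "M' 1 = M1 1" "\<forall>a<M1 1. M' a = M1 a" "\<forall>x. x \<notin> Wn i \<longrightarrow> vr M' x = vr M1 x" "I M' \<and> vr M' (21+2*i) = 0"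
      then obtain v where v: "Inv n es M'" "v \<le> n" "vr M' (21+2*i) = n - v" "vr M' 5 \<noteq> 0 \<longleftrightarrow> vr M 5 \<noteq> 0 \<or> ?F v"
        "vr M' (21+2*i) = 0" unfolding I_def by blast
      have "v = n" using v(2,3,5) by simp
      moreover have "?F n \<longleftrightarrow> (\<exists>\<tau>. (\<forall>j<i. \<tau> j = vr M (20+2*j)) \<and> (\<forall>j. i \<le> j \<and> j < i + Suc d \<longrightarrow> \<tau> j < n) \<and> tupOK es L \<tau>)"
        by (subst range_split[of i "i + Suc d"]) auto
      ultimately show "Inv n es M' \<and> (vr M' 5 \<noteq> 0 \<longleftrightarrow> vr M 5 \<noteq> 0 \<or>
     (\<exists>\<tau>. (\<forall>j<i. \<tau> j = vr M (20+2*j)) \<and> (\<forall>j. i \<le> j \<and> j < i + Suc d \<longrightarrow> \<tau> j < n) \<and> tupOK es L \<tau>))"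
        using v by simp
    qed
  qed (auto simp: Wn_def)
qed




lemma H_forb:
  assumes "is_graph VH EH" "countable VH" "universal_for_Forb VG EG VH EH"
  shows "\<not> (\<exists>k. graph_hom VG EG VH EH k)"
proof
  assume "\<exists>k. graph_hom VG EG VH EH k"
  then obtain k where k: "graph_hom VG EG VH EH k" by blast
  define g where "g = to_nat_on VH"
  define V' where "V' = g ` VH"
  define E' where "E' = map_prod g g ` EH"
  have inj: "inj_on g VH" unfolding g_def using assms(2) by auto
  have EH: "EH \<subseteq> VH \<times> VH" "sym EH" using assms(1) unfolding is_graph_def by auto
  have gr: "is_graph V' E'"
    unfolding is_graph_def V'_def E'_def using EH by (auto simp: sym_def)
  define f' where "f' = from_nat_into VH"
  have fg: "f' (g x) = x" if "x \<in> VH" for x unfolding f'_def g_def using assms(2) that by simp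
  have emb: "graph_emb V' E' VH EH f'"
    unfolding graph_emb_def graph_hom_def
  proof (intro conjI)
    show "\<forall>x\<in>V'. f' x \<in> VH" unfolding V'_def using fg by auto
    show "\<forall>(x, y)\<in>E'. (f' x, f' y) \<in> EH" unfolding E'_def
    proof (clarsimp)
      fix a b assume ab: "(a,b) \<in> EH"
      then have "a \<in> VH" "b \<in> VH" using EH(1) by auto
      then show "(f' (g a), f' (g b)) \<in> EH" using fg ab by simp
    qed
    show "inj_on f' V'" unfolding V'_def using fg by (auto simp: inj_on_def)
    show "\<forall>x\<in>V'. \<forall>y\<in>V'. (f' x, f' y) \<in> EH \<longrightarrow> (x, y) \<in> E'" unfolding V'_def E'_def using fg by force
  qed
  have "in_Forb VG EG V' E'" using assms(3) gr emb unfolding universal_for_Forb_def by blast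
  moreover have "graph_hom VG EG V' E' (g \<circ> k)"
    using k unfolding graph_hom_def V'_def E'_def by force
  ultimately show False unfolding in_Forb_def by blast
qed

lemma sat_iff:
  assumes "is_graph VH EH" "countable VH" "universal_for_Forb VG EG VH EH" "csp_instance n es"
  shows "csp_sat VH EH n es \<longleftrightarrow> \<not> (\<exists>h. graph_hom VG EG {..<n} (symE es) h)"
proof
  assume "csp_sat VH EH n es"
  then obtain f where f: "\<forall>x<n. f x \<in> VH" "\<forall>(x,y)\<in>set es. (f x, f y) \<in> EH" unfolding csp_sat_def by blast
  have sEH: "sym EH" using assms(1) unfolding is_graph_def by auto
  show "\<not> (\<exists>h. graph_hom VG EG {..<n} (symE es) h)"
  proof
    assume "\<exists>h. graph_hom VG EG {..<n} (symE es) h"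
    then obtain h where h: "graph_hom VG EG {..<n} (symE es) h" by blast
    have "graph_hom VG EG VH EH (f \<circ> h)"
      unfolding graph_hom_def
    proof (intro conjI ballI)
      fix x assume "x \<in> VG" then show "(f \<circ> h) x \<in> VH" using h f(1) unfolding graph_hom_def by auto
    next
      fix p assume p: "p \<in> EG"
      obtain a b where ab: "p = (a,b)" by (cases p)
      have "(h a, h b) \<in> set es \<or> (h b, h a) \<in> set es" using h p ab unfolding graph_hom_def symE_def by auto
      then show "case p of (x, y) \<Rightarrow> ((f \<circ> h) x, (f \<circ> h) y) \<in> EH"
        using f(2) sEH ab unfolding sym_def by auto
    qed
    then show False using H_forb[OF assms(1-3)] by blast
  qed
next
  assume nh: "\<not> (\<exists>h. graph_hom VG EG {..<n} (symE es) h)"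
  have gr: "is_graph {..<n} (symE es)"
    using assms(4) unfolding is_graph_def csp_instance_def symE_def by (auto simp: sym_def)
  have "in_Forb VG EG {..<n} (symE es)" using nh unfolding in_Forb_def by blast
  then obtain f where "graph_emb {..<n} (symE es) VH EH f"
    using assms(3) gr unfolding universal_for_Forb_def by blast
  then show "csp_sat VH EH n es" unfolding csp_sat_def graph_emb_def graph_hom_def symE_def
    by (intro exI[of _ f]) auto
qed

definition Lof :: "'g list \<Rightarrow> ('g \<times> 'g) set \<Rightarrow> (nat \<times> nat) list" where
  "Lof gs EG = filter (\<lambda>(a,b). (gs!a, gs!b) \<in> EG) (List.product [0..<length gs] [0..<length gs])"

lemma hom_iff_tup:
  assumes "is_graph VG EG" "distinct gs" "set gs = VG"
  shows "(\<exists>h. graph_hom VG EG {..<n} (symE es) h) \<longleftrightarrow> (\<exists>\<tau>. (\<forall>j<length gs. \<tau> j < n) \<and> tupOK es (Lof gs EG) \<tau>)"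
proof
  assume "\<exists>h. graph_hom VG EG {..<n} (symE es) h"
  then obtain h where h: "graph_hom VG EG {..<n} (symE es) h" by blast
  have "(\<forall>j<length gs. h (gs!j) < n) \<and> tupOK es (Lof gs EG) (\<lambda>j. h (gs!j))"
    using h assms(3) unfolding graph_hom_def tupOK_def Lof_def by auto
  then show "\<exists>\<tau>. (\<forall>j<length gs. \<tau> j < n) \<and> tupOK es (Lof gs EG) \<tau>" by (rule exI[of _ "\<lambda>j. h (gs!j)"])
next
  assume "\<exists>\<tau>. (\<forall>j<length gs. \<tau> j < n) \<and> tupOK es (Lof gs EG) \<tau>"
  then obtain \<tau> where t: "\<forall>j<length gs. \<tau> j < n" "tupOK es (Lof gs EG) \<tau>" by (elim exE conjE)
  define ix where "ix = (\<lambda>x. SOME j. j < length gs \<and> gs!j = x)"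
  have ix: "ix x < length gs \<and> gs ! (ix x) = x" if "x \<in> VG" for x
  proof -
    have "\<exists>j. j < length gs \<and> gs!j = x" using that assms(3) by (auto simp: in_set_conv_nth)
    then show ?thesis unfolding ix_def by (rule someI_ex)
  qed
  have EG: "EG \<subseteq> VG \<times> VG" using assms(1) unfolding is_graph_def by auto
  have "graph_hom VG EG {..<n} (symE es) (\<tau> \<circ> ix)"
    unfolding graph_hom_def
  proof (intro conjI ballI)
    fix x assume "x \<in> VG" then show "(\<tau> \<circ> ix) x \<in> {..<n}" using ix t(1) by auto
  next
    fix p assume p: "p \<in> EG"
    obtain x y where xy: "p = (x,y)" by (cases p)
    have "x \<in> VG" "y \<in> VG" using p xy EG by auto
    then have "(ix x, ix y) \<in> set (Lof gs EG)" using ix p xy unfolding Lof_def by auto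
    then show "case p of (x, y) \<Rightarrow> ((\<tau> \<circ> ix) x, (\<tau> \<circ> ix) y) \<in> symE es"
      using t(2) xy unfolding tupOK_def by auto
  qed
  then show "\<exists>h. graph_hom VG EG {..<n} (symE es) h" by blast
qed

lemma Lof_bound: "\<forall>(a,b)\<in>set (Lof gs EG). a < 0 + length gs \<and> b < 0 + length gs"
  unfolding Lof_def by auto




definition boot :: "instr list" where
 "boot = [Jz 1 15,
 AddI 1 1 1, AddI 1 1 1, StoreInd 1 0,
 LoadConst 0 1, AddI 0 0 1, StoreInd 0 2,
 LoadConst 0 2, AddI 0 0 1, StoreInd 0 3,
 LoadConst 0 3, AddI 0 0 1, LoadConst 2 1, StoreInd 0 2,
 Jmp 17,
 LoadConst 1 4, StoreInd 1 0,
 LoadConst 0 4, AddI 0 0 1, StoreInd 0 1,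
 LoadConst 0 14, AddI 0 0 1, LoadConst 2 1, StoreInd 0 2,
 LoadConst 0 15, AddI 0 0 1, LoadConst 2 2, StoreInd 0 2,
 LoadConst 0 16, AddI 0 0 1, LoadConst 2 4, StoreInd 0 2]"

lemma ri0: "ram_input n es 0 = n" by (simp add: ram_input_def)
lemma ri1: "ram_input n es (Suc 0) = length es" by (simp add: ram_input_def)
lemma ri_lo: "i < length es \<Longrightarrow> ram_input n es (2+2*i) = fst (es!i) \<and> ram_input n es (3+2*i) = snd (es!i)"
  by (simp add: ram_input_def)
lemma ri_lo1: "i < length es \<Longrightarrow> ram_input n es (2+2*i) = fst (es!i)" using ri_lo by blast
lemma ri_lo2: "i < length es \<Longrightarrow> ram_input n es (3+2*i) = snd (es!i)" using ri_lo by blast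
lemma ri_lo1': "i < length es \<Longrightarrow> ram_input n es (Suc (Suc (2*i))) = fst (es!i)" using ri_lo by simp
lemma ri_hi: "2 + 2*length es \<le> a \<Longrightarrow> ram_input n es a = 0"
  unfolding ram_input_def by (cases "a - 2 < 2 * length es") auto
lemma ri1': "ram_input n es 1 = length es" by (simp add: ram_input_def)
lemma ri2: "es \<noteq> [] \<Longrightarrow> ram_input n es (Suc (Suc 0)) = fst (es!0) \<and> ram_input n es (Suc (Suc (Suc 0))) = snd (es!0)"
  using ri_lo[of 0 es n] by (simp add: numeral_eq_Suc)

lemma Inv_intro:
  assumes "M 1 = b" "b = (if es = [] then 4 else 4 * length es)" "M b = n" "M (b+4) = b"
    "M (b+14) = 1" "M (b+15) = 2" "M (b+16) = 4" "M (b+3) \<noteq> 0 \<longleftrightarrow> es \<noteq> []"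
    "es \<noteq> [] \<Longrightarrow> M (b+1) = fst (es!0)" "es \<noteq> [] \<Longrightarrow> M (b+2) = snd (es!0)"
    "\<And>i. 1 \<le> i \<Longrightarrow> i < length es \<Longrightarrow> M (2+2*i) = fst (es!i)"
    "\<And>i. 1 \<le> i \<Longrightarrow> i < length es \<Longrightarrow> M (3+2*i) = snd (es!i)"
  shows "Inv n es M"
  using assms unfolding Inv_def by auto

lemma boot_ne:
  assumes "at P 0 boot" "es \<noteq> []"
  shows "\<exists>Mb. (ram_step P ^^ 30) (0, ram_input n es) = (32, Mb) \<and> Inv n es Mb"
proof -
  have m: "length es \<noteq> 0" using assms(2) by simp
  have m4: "length es + length es + (length es + length es) \<noteq> 1" "length es + length es + (length es + length es) \<noteq> 0"
    "length es + length es + (length es + length es) \<noteq> 2" "length es + length es + (length es + length es) \<noteq> 3"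
    using m by presburger+
  show ?thesis using assms m m4
    apply (simp add: boot_def at_Cons numeral_eq_Suc fp_Suc ri0 ri1 ri1' del: One_nat_def)
    apply (rule Inv_intro[where b="4 * length es"])
               apply (simp_all add: ri2 ri_lo1 ri_lo1' ri_lo2 del: One_nat_def)
    done
qed

lemma ri_nil: "2 \<le> a \<Longrightarrow> ram_input n [] a = 0" using ri_hi[of "[]" a n] by simp

lemma boot_nil:
  assumes "at P 0 boot" "es = []"
  shows "\<exists>Mb. (ram_step P ^^ 18) (0, ram_input n es) = (32, Mb) \<and> Inv n es Mb"
proof -
  have r: "ram_input n [] 7 = 0" by (rule ri_nil) simp
  show ?thesis using assms r
    apply (simp add: boot_def at_Cons numeral_eq_Suc fp_Suc ri0 ri1 ri1' del: One_nat_def)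
    apply (rule Inv_intro[where b="4"])
               apply (simp_all add: numeral_eq_Suc del: One_nat_def)
    done
qed

definition main :: "nat \<Rightarrow> (nat \<times> nat) list \<Rightarrow> acom" where
  "main k L = ASeq (AConst 5 0) (nest k 0 L)"

abbreviation "TCo L es \<equiv> length L * (1000 * (length es + 1) + 10) + 13"

lemma main_spec:
  assumes "Inv n es M" "\<forall>(a,b)\<in>set L. a < k \<and> b < k"
  shows "tot (main k L) M (\<lambda>t M'. M' 1 = M 1 \<and> (vr M' 5 \<noteq> 0 \<longleftrightarrow> (\<exists>\<tau>. (\<forall>j<k. \<tau> j < n) \<and> tupOK es L \<tau>))
      \<and> t \<le> 4 + tn (TCo L es) n k)"
proof -
  have b: "4 \<le> M 1" by (rule Inv_base[OF assms(1)])
  have "sp (main k L) M UNIV (\<lambda>M'. vr M' 5 \<noteq> 0 \<longleftrightarrow> (\<exists>\<tau>. (\<forall>j<k. \<tau> j < n) \<and> tupOK es L \<tau>)) (4 + tn (TCo L es) n k)"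
    unfolding main_def
  proof (rule sp_seq[where Wa="{5}" and Ta=4 and Pa="\<lambda>M'. vr M' 5 = 0" and Wb=UNIV and Tb="tn (TCo L es) n k"])
    show "sp (AConst 5 0) M {5} (\<lambda>M'. vr M' 5 = 0) 4" by (rule sp_intro) (use b in auto)
    fix M1 assume h1: "M1 1 = M 1" "\<forall>a<M 1. M1 a = M a" "\<forall>x. x \<notin> {5} \<longrightarrow> vr M1 x = vr M x" "vr M1 5 = 0"
    have i1: "Inv n es M1" by (rule Inv_frame[OF assms(1) h1(1-3)]) auto
    show "sp (nest k 0 L) M1 UNIV (\<lambda>M'. vr M' 5 \<noteq> 0 \<longleftrightarrow> (\<exists>\<tau>. (\<forall>j<k. \<tau> j < n) \<and> tupOK es L \<tau>)) (tn (TCo L es) n k)"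
      apply (rule sp_mono[OF nest_spec[OF i1, of L 0 k]])
      using assms(2) h1(4) by auto
  qed auto
  then show ?thesis unfolding sp_def by (rule tot_mono) auto
qed

definition tailc :: "nat \<Rightarrow> instr list" where
  "tailc E = [LoadConst 0 5, AddI 0 0 1, LoadInd 3 0, Jz 3 (E+6), LoadConst 0 0, Jmp (E+7), LoadConst 0 1]"

lemma tail_run:
  assumes "at P E (tailc E)"
  shows "\<exists>t' M'. t' \<le> 6 \<and> (ram_step P ^^ t') (E, M) = (E+7, M') \<and> (M' 0 \<noteq> 0 \<longleftrightarrow> M (M 1 + 5) = 0)"
proof (cases "M (M 1 + 5) = 0")
  case True
  then show ?thesis using assms
    by (intro exI[of _ 5]) (simp add: tailc_def at_Cons numeral_eq_Suc fp_Suc add.commute)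
next
  case False
  then show ?thesis using assms
    by (intro exI[of _ 6]) (simp add: tailc_def at_Cons numeral_eq_Suc fp_Suc add.commute)
qed

definition prog :: "nat \<Rightarrow> (nat \<times> nat) list \<Rightarrow> instr list" where
  "prog k L = boot @ comp 32 (main k L) @ tailc (32 + clen (main k L))"

lemma at_self: "at P 0 P" unfolding at_def by simp

lemma len_boot: "length boot = 32" by (simp add: boot_def)
lemma len_tail: "length (tailc E) = 7" by (simp add: tailc_def)

lemma prog_run:
  assumes "\<forall>(a,b)\<in>set L. a < k \<and> b < k"
  shows "\<exists>t. t \<le> 40 + tn (TCo L es) n k \<and> ram_halted (prog k L) (ram_run (prog k L) n es t) \<and>
     (snd (ram_run (prog k L) n es t) 0 \<noteq> 0 \<longleftrightarrow> \<not> (\<exists>\<tau>. (\<forall>j<k. \<tau> j < n) \<and> tupOK es L \<tau>))"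
proof -
  let ?P = "prog k L"
  let ?E = "32 + clen (main k L)"
  have at0: "at ?P 0 boot" and at1: "at ?P 32 (comp 32 (main k L))" and at2: "at ?P ?E (tailc ?E)"
    using at_self[of ?P] unfolding prog_def by (auto simp: at_app len_boot)
  have lenP: "length ?P = ?E + 7" unfolding prog_def by (simp add: len_boot len_tail)
  obtain tb Mb where b: "tb \<le> 30" "(ram_step ?P ^^ tb) (0, ram_input n es) = (32, Mb)" "Inv n es Mb"
  proof (cases "es = []")
    case True
    then obtain Mb where "(ram_step ?P ^^ 18) (0, ram_input n es) = (32, Mb)" "Inv n es Mb"
      using boot_nil[OF at0 True, of n] by blast
    then show ?thesis using that[of 18 Mb] by simp
  next
    case False
    then obtain Mb where "(ram_step ?P ^^ 30) (0, ram_input n es) = (32, Mb)" "Inv n es Mb"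
      using boot_ne[OF at0 False, of n] by blast
    then show ?thesis using that[of 30 Mb] by simp
  qed
  obtain tm Ma where m: "big (main k L) Mb tm Ma" "Ma 1 = Mb 1"
    "vr Ma 5 \<noteq> 0 \<longleftrightarrow> (\<exists>\<tau>. (\<forall>j<k. \<tau> j < n) \<and> tupOK es L \<tau>)" "tm \<le> 4 + tn (TCo L es) n k"
    using main_spec[OF b(3) assms] unfolding tot_def by blast
  have b4: "4 \<le> Mb 1" by (rule Inv_base[OF b(3)])
  obtain Mc where c: "(ram_step ?P ^^ tm) (32, Mb) = (32 + clen (main k L), Mc)" "agree Mc Ma"
    using comp_correct[OF m(1) at1 b4] unfolding agree_def by blast
  have c1: "Mc 1 = Ma 1" "Mc (Mc 1 + 5) = Ma (Ma 1 + 5)" using c(2) b4 m(2) unfolding agree_def by auto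
  obtain t' M' where t: "t' \<le> 6" "(ram_step ?P ^^ t') (?E, Mc) = (?E+7, M')" "M' 0 \<noteq> 0 \<longleftrightarrow> Mc (Mc 1 + 5) = 0"
    using tail_run[OF at2] by blast
  have run: "ram_run ?P n es (tb + tm + t') = (?E + 7, M')"
    unfolding ram_run_def using b(2) c(1) t(2) by (simp add: fp_add)
  show ?thesis
    apply (rule exI[of _ "tb + tm + t'"])
    using run lenP b(1) m(4) t(1,3) c1 m(3) by (auto simp: ram_halted_def)
qed

lemma tn_bound:
  assumes "TC \<le> K * S" "n \<le> S" "1 \<le> S" "44 \<le> K"
  shows "tn TC n d \<le> K^(d+1) * S^(d+1)"
proof (induction d)
  case 0 then show ?case using assms(1) by simp
next
  case (Suc d)
  define X where "X = K^(d+1) * S^(d+1)"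
  have X1: "1 \<le> X" unfolding X_def using assms(3,4) by (simp add: one_le_power)
  have "tn TC n (Suc d) = 18 + (tn TC n d + 25) * n" by simp
  also have "\<dots> \<le> 18 + (X + 25) * S" using Suc.IH assms(2) unfolding X_def by (intro add_left_mono mult_le_mono) auto
  also have "\<dots> = X * S + 18 + 25 * S" by (simp add: algebra_simps)
  also have "\<dots> \<le> X * S + 43 * S" using assms(3) by simp
  also have "\<dots> \<le> X * S + 43 * (X * S)" using X1 by (intro add_left_mono mult_le_mono2) simp
  also have "\<dots> = 44 * (X * S)" by simp
  also have "\<dots> \<le> K * (X * S)" using assms(4) by (intro mult_le_mono1)
  also have "\<dots> = K^(Suc d + 1) * S^(Suc d + 1)" unfolding X_def by (simp add: algebra_simps)
  finally show ?case .
qed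

lemma TC_bound: "TCo L es \<le> (1100 * (length L + 1)) * (n + length es + 1)"
proof -
  let ?l = "length L" and ?S = "n + length es + 1"
  have "?l * (1000 * (length es + 1) + 10) \<le> ?l * (1010 * ?S)" by (intro mult_le_mono2) simp
  moreover have "13 \<le> 1100 * ?S" by simp
  ultimately have "TCo L es \<le> ?l * (1010 * ?S) + 1100 * ?S" by linarith
  also have "\<dots> \<le> (1100 * (?l + 1)) * ?S" by (simp add: algebra_simps)
  finally show ?thesis .
qed

theorem lemma4p5:
  fixes VG :: "'g set" and EG :: "('g \<times> 'g) set"
    and VH :: "'h set" and EH :: "('h \<times> 'h) set"
  assumes "is_graph VG EG" and "finite VG"
    and "is_graph VH EH" and "countable VH"
    and "universal_for_Forb VG EG VH EH"
  shows "csp_poly_time VH EH"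
proof -
  obtain gs where gs: "set gs = VG" "distinct gs" using finite_distinct_list[OF assms(2)] by blast
  define k where "k = length gs"
  define L where "L = Lof gs EG"
  define K where "K = 1100 * (length L + 1)"
  have Lb: "\<forall>(a,b)\<in>set L. a < k \<and> b < k" using Lof_bound[of gs EG] unfolding L_def k_def by simp
  have K44: "44 \<le> K" unfolding K_def by simp
  show ?thesis unfolding csp_poly_time_def
  proof (rule exI[of _ "prog k L"], rule exI[of _ "40 + K^(k+1)"], rule exI[of _ "k+1"], intro allI impI)
    fix n es assume inst: "csp_instance n es"
    let ?S = "inst_size n es"
    have S: "?S = n + length es + 1" "1 \<le> ?S" "n \<le> ?S" by (auto simp: inst_size_def)
    obtain t where t: "t \<le> 40 + tn (TCo L es) n k" "ram_halted (prog k L) (ram_run (prog k L) n es t)"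
      "snd (ram_run (prog k L) n es t) 0 \<noteq> 0 \<longleftrightarrow> \<not> (\<exists>\<tau>. (\<forall>j<k. \<tau> j < n) \<and> tupOK es L \<tau>)"
      using prog_run[OF Lb] by blast
    have "tn (TCo L es) n k \<le> K^(k+1) * ?S^(k+1)"
      by (rule tn_bound) (use TC_bound[of L es n] S K44 K_def in auto)
    moreover have "1 \<le> ?S^(k+1)" using S(2) by (simp add: one_le_power)
    ultimately have "t \<le> 40 * ?S^(k+1) + K^(k+1) * ?S^(k+1)" using t(1) by linarith
    then have "t \<le> (40 + K^(k+1)) * ?S^(k+1)" by (simp add: add_mult_distrib)
    moreover have "snd (ram_run (prog k L) n es t) 0 \<noteq> 0 \<longleftrightarrow> csp_sat VH EH n es"
      using t(3) hom_iff_tup[OF assms(1) gs(2,1), of n es] sat_iff[OF assms(3,4,5) inst]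
      unfolding k_def L_def by simp
    ultimately show "\<exists>t. t \<le> (40 + K^(k+1)) * inst_size n es ^ (k+1) \<and> ram_halted (prog k L) (ram_run (prog k L) n es t) \<and>
             (snd (ram_run (prog k L) n es t) 0 \<noteq> 0 \<longleftrightarrow> csp_sat VH EH n es)"
      using t(2) by blast
  qed
qed


end
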